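(* Let $C\subset\mathbb{R}^n$ be a pointed, $n$-dimensional closed convex cone, $\Omega=S^{n-1}\cap\operatorname{int}C^{\circ}$, and $\omega\subset\Omega$ a nonempty compact set. Then there exist $K,L\in\mathcal{K}(C,\omega)$ such that $S_{\gamma^{n}}(K,\cdot)=S_{\gamma^{n}}(L,\cdot)$ but $K\neq L$.
   Context: $C^{\circ}=\{x:\langle x,y\rangle\le 0\ \forall y\in C\}$. A pseudo-cone is a nonempty closed convex set $K$ with $o\notin K$ and $\lambda K\subseteq K$ for $\lambda\ge1$; it is a $C$-pseudo-cone if its recession cone $\{z:K+z\subseteq K\}$ equals $C$. Support function $h_K(x)=\sup_{y\in K}\langle x,y\rangle$ on $C^{\circ}$. For $u\in\Omega$, $H_K^-(u)=\{x:\langle x,u\rangle\le h_K(u)\}$. $\mathcal{K}(C,\omega)$ is the set of $C$-pseudo-cones $K$ with $K=C\cap\bigcap_{u\in\omega}H^-_K(u)$. For Borel $\eta\subset\Omega$, $S_{\gamma^n}(K,\eta)=(2\pi)^{-n/2}\int_{\nu_K^{-1}(\eta)}e^{-|x|^2/2}d\mathcal{H}^{n-1}(x)$, where $\nu_K^{-1}(\eta)$ is the set of boundary points of $K$ with an outer unit normal in $\eta$. *)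

theory Defs
  imports "HOL-Analysis.Analysis"
begin

section \<open>Hausdorff measure (normalised as usual)\<close>

definition hausdorff_const :: "real \<Rightarrow> real" where
  "hausdorff_const s = pi powr (s / 2) / Gamma (s / 2 + 1) / 2 powr s"

text \<open>The size-delta approximating outer measure: covers by countably many bounded sets
  of diameter at most delta.\<close>
definition hausdorff_pre :: "real \<Rightarrow> real \<Rightarrow> 'a::euclidean_space set \<Rightarrow> ennreal" where
  "hausdorff_pre s \<delta> A =
     (INF E \<in> {E :: nat \<Rightarrow> 'a set. A \<subseteq> (\<Union>i. E i) \<and> (\<forall>i. bounded (E i) \<and> diameter (E i) \<le> \<delta>)}.
        (\<Sum>i. ennreal (hausdorff_const s * diameter (E i) powr s)))"

definition hausdorff_outer :: "real \<Rightarrow> 'a::euclidean_space set \<Rightarrow> ennreal" where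
  "hausdorff_outer s A = (SUP \<delta> \<in> {0<..}. hausdorff_pre s \<delta> A)"

text \<open>s-dimensional Hausdorff measure, restricted to the Borel sets.\<close>
definition hausdorff_measure :: "real \<Rightarrow> 'a::euclidean_space measure" where
  "hausdorff_measure s = measure_of UNIV (sets borel) (hausdorff_outer s)"

section \<open>Cones and pseudo-cones\<close>

definition polar_cone :: "'a::euclidean_space set \<Rightarrow> 'a set" where
  "polar_cone C = {x. \<forall>y\<in>C. x \<bullet> y \<le> 0}"

definition pointed_cone :: "'a::euclidean_space set \<Rightarrow> bool" where
  "pointed_cone C \<longleftrightarrow> C \<inter> uminus ` C = {0}"

definition pseudo_cone :: "'a::euclidean_space set \<Rightarrow> bool" where
  "pseudo_cone K \<longleftrightarrow> K \<noteq> {} \<and> closed K \<and> convex K \<and> 0 \<notin> K \<and>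
     (\<forall>t::real. t \<ge> 1 \<longrightarrow> (\<lambda>y. t *\<^sub>R y) ` K \<subseteq> K)"

definition recession_cone :: "'a::euclidean_space set \<Rightarrow> 'a set" where
  "recession_cone K = {z. (\<lambda>y. y + z) ` K \<subseteq> K}"

definition C_pseudo_cone :: "'a::euclidean_space set \<Rightarrow> 'a set \<Rightarrow> bool" where
  "C_pseudo_cone C K \<longleftrightarrow> pseudo_cone K \<and> recession_cone K = C"

definition support_fun :: "'a::euclidean_space set \<Rightarrow> 'a \<Rightarrow> real" where
  "support_fun K x = Sup ((\<lambda>y. x \<bullet> y) ` K)"

definition half_space_K :: "'a::euclidean_space set \<Rightarrow> 'a \<Rightarrow> 'a set" where
  "half_space_K K u = {x. x \<bullet> u \<le> support_fun K u}"

text \<open>\<Omega> = S^{n-1} \<inter> int C\<degree>\<close>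
definition Omega :: "'a::euclidean_space set \<Rightarrow> 'a set" where
  "Omega C = sphere 0 1 \<inter> interior (polar_cone C)"

text \<open>\<K>(C,\<omega>)\<close>
definition KCw :: "'a::euclidean_space set \<Rightarrow> 'a set \<Rightarrow> 'a set set" where
  "KCw C \<omega> = {K. C_pseudo_cone C K \<and> K = C \<inter> (\<Inter>u\<in>\<omega>. half_space_K K u)}"

section \<open>Gaussian surface area measure\<close>

definition outer_unit_normal :: "'a::euclidean_space set \<Rightarrow> 'a \<Rightarrow> 'a \<Rightarrow> bool" where
  "outer_unit_normal K x u \<longleftrightarrow> norm u = 1 \<and> (\<forall>y\<in>K. (y - x) \<bullet> u \<le> 0)"

text \<open>reverse spherical image \<nu>_K^{-1}(\<eta>)\<close>
definition rev_gauss_image :: "'a::euclidean_space set \<Rightarrow> 'a set \<Rightarrow> 'a set" where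
  "rev_gauss_image K \<eta> = {x \<in> frontier K. \<exists>u\<in>\<eta>. outer_unit_normal K x u}"

definition gauss_surface_measure :: "'a::euclidean_space set \<Rightarrow> 'a set \<Rightarrow> ennreal" where
  "gauss_surface_measure K \<eta> =
     ennreal ((2 * pi) powr (- (real DIM('a) / 2))) *
     (\<integral>\<^sup>+ x. indicator (rev_gauss_image K \<eta>) x * ennreal (exp (- (norm x)\<^sup>2 / 2))
        \<partial>(hausdorff_measure (real DIM('a) - 1)))"

end

theory Submission
  imports Defs
begin

lemma hconst_nonneg: "0 \<le> s \<Longrightarrow> 0 \<le> hausdorff_const s"
  unfolding hausdorff_const_def
  by (intro divide_nonneg_nonneg) (auto intro: less_imp_le Gamma_real_pos)

lemma hp_mono: "A \<subseteq> B \<Longrightarrow> hausdorff_pre s d A \<le> hausdorff_pre s d B"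
  unfolding hausdorff_pre_def by (rule INF_superset_mono) auto

lemma ho_mono: "A \<subseteq> B \<Longrightarrow> hausdorff_outer s A \<le> hausdorff_outer s B"
  unfolding hausdorff_outer_def by (intro SUP_mono) (auto intro: hp_mono)

lemma hp_le_ho: "0 < d \<Longrightarrow> hausdorff_pre s d A \<le> hausdorff_outer s A"
  unfolding hausdorff_outer_def by (rule SUP_upper) auto

lemma ho_le: "(\<And>d. 0 < d \<Longrightarrow> hausdorff_pre s d A \<le> B) \<Longrightarrow> hausdorff_outer s A \<le> B"
  unfolding hausdorff_outer_def by (rule SUP_least) auto

lemma hp_le_cover:
  assumes "A \<subseteq> (\<Union>i. E i)" "\<And>i. bounded (E i)" "\<And>i. diameter (E i) \<le> d"
  shows "hausdorff_pre s d A \<le> (\<Sum>i. ennreal (hausdorff_const s * diameter (E i) powr s))"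
  unfolding hausdorff_pre_def by (rule INF_lower) (use assms in auto)

lemma ho_lipschitz:
  fixes f :: "'a::euclidean_space \<Rightarrow> 'a"
  assumes lip: "\<And>x y. dist (f x) (f y) \<le> dist x y" and s: "0 \<le> s"
  shows "hausdorff_outer s (f ` A) \<le> hausdorff_outer s A"
proof (rule ho_le)
  fix d :: real assume d: "0 < d"
  have "hausdorff_pre s d (f ` A) \<le> hausdorff_pre s d A"
    unfolding hausdorff_pre_def[of s d A]
  proof (rule INF_greatest)
    fix E :: "nat \<Rightarrow> 'a set" assume "E \<in> {E. A \<subseteq> (\<Union>i. E i) \<and> (\<forall>i. bounded (E i) \<and> diameter (E i) \<le> d)}"
    then have E: "A \<subseteq> (\<Union>i. E i)" "\<And>i. bounded (E i)" "\<And>i. diameter (E i) \<le> d" by auto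
    have bd: "bounded (f ` E i)" for i
    proof -
      obtain x e where "\<forall>y\<in>E i. dist x y \<le> e" using E(2)[of i] unfolding bounded_def by auto
      then have "\<forall>y\<in>f ` E i. dist (f x) y \<le> e" using lip order_trans by fastforce
      then show ?thesis unfolding bounded_def by blast
    qed
    have dm: "diameter (f ` E i) \<le> diameter (E i)" for i
    proof (rule diameter_le)
      show "f ` E i \<noteq> {} \<or> 0 \<le> diameter (E i)" using diameter_ge_0[OF E(2)] by auto
      fix x y assume "x \<in> f ` E i" "y \<in> f ` E i"
      then obtain a b where "a \<in> E i" "b \<in> E i" "x = f a" "y = f b" by auto
      then show "norm (x - y) \<le> diameter (E i)"
        using lip[of a b] diameter_bounded_bound[OF E(2)[of i], of a b] by (simp add: dist_norm)
    qed
    have "hausdorff_pre s d (f ` A) \<le> (\<Sum>i. ennreal (hausdorff_const s * diameter (f ` E i) powr s))"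
    proof (rule hp_le_cover)
      show "f ` A \<subseteq> (\<Union>i. f ` E i)" using E(1) by blast
      show "diameter (f ` E i) \<le> d" for i using dm[of i] E(3)[of i] by linarith
    qed (use bd in auto)
    also have "\<dots> \<le> (\<Sum>i. ennreal (hausdorff_const s * diameter (E i) powr s))"
    proof (intro suminf_le ennreal_leI mult_left_mono powr_mono2 hconst_nonneg s)
      fix i show "0 \<le> diameter (f ` E i)" using diameter_ge_0[OF bd] .
    qed (use dm in auto)
    finally show "hausdorff_pre s d (f ` A) \<le> (\<Sum>i. ennreal (hausdorff_const s * diameter (E i) powr s))" .
  qed
  also have "\<dots> \<le> hausdorff_outer s A" by (rule hp_le_ho[OF d])
  finally show "hausdorff_pre s d (f ` A) \<le> hausdorff_outer s A" .
qed

lemma ennreal_le_mult_INF: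
  fixes g :: "'b \<Rightarrow> ennreal"
  assumes c: "0 < c" and h: "\<And>E. E \<in> X \<Longrightarrow> a \<le> ennreal c * g E"
  shows "a \<le> ennreal c * (INF E\<in>X. g E)"
proof -
  have inv: "ennreal (1/c) * (ennreal c * y) = y" for y :: ennreal
    using c by (simp add: ennreal_mult'[symmetric] mult.assoc[symmetric])
  have "ennreal (1/c) * a \<le> (INF E\<in>X. g E)"
  proof (rule INF_greatest)
    fix E assume "E \<in> X"
    then have "ennreal (1/c) * a \<le> ennreal (1/c) * (ennreal c * g E)"
      using h by (intro mult_left_mono) auto
    then show "ennreal (1/c) * a \<le> g E" using inv by simp
  qed
  then have "ennreal c * (ennreal (1/c) * a) \<le> ennreal c * (INF E\<in>X. g E)"
    by (intro mult_left_mono) auto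
  moreover have "ennreal c * (ennreal (1/c) * a) = a"
    using c by (simp add: ennreal_mult'[symmetric] mult.assoc[symmetric])
  ultimately show ?thesis by simp
qed

lemma ho_scale_le:
  fixes A :: "'a::euclidean_space set"
  assumes t: "0 < t" and s: "0 \<le> s"
  shows "hausdorff_outer s ((*\<^sub>R) t ` A) \<le> ennreal (t powr s) * hausdorff_outer s A"
proof (rule ho_le)
  fix d :: real assume d: "0 < d"
  have "hausdorff_pre s d ((*\<^sub>R) t ` A) \<le> ennreal (t powr s) * hausdorff_pre s (d / t) A"
    unfolding hausdorff_pre_def[of s "d/t" A]
  proof (rule ennreal_le_mult_INF)
    show "0 < t powr s" using t by simp
    fix E :: "nat \<Rightarrow> 'a set"
    assume "E \<in> {E. A \<subseteq> (\<Union>i. E i) \<and> (\<forall>i. bounded (E i) \<and> diameter (E i) \<le> d / t)}"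
    then have E: "A \<subseteq> (\<Union>i. E i)" "\<And>i. bounded (E i)" "\<And>i. diameter (E i) \<le> d / t" by auto
    have bd: "bounded ((*\<^sub>R) t ` E i)" for i using E(2) by (simp add: bounded_scaling)
    have dm: "diameter ((*\<^sub>R) t ` E i) \<le> t * diameter (E i)" for i
    proof (rule diameter_le)
      show "(*\<^sub>R) t ` E i \<noteq> {} \<or> 0 \<le> t * diameter (E i)" using diameter_ge_0[OF E(2)] t by auto
      fix x y assume "x \<in> (*\<^sub>R) t ` E i" "y \<in> (*\<^sub>R) t ` E i"
      then obtain a b where "a \<in> E i" "b \<in> E i" "x = t *\<^sub>R a" "y = t *\<^sub>R b" by auto
      then show "norm (x - y) \<le> t * diameter (E i)"
        using diameter_bounded_bound[OF E(2)[of i], of a b] t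
        by (simp add: dist_norm scaleR_diff_right[symmetric])
    qed
    have "hausdorff_pre s d ((*\<^sub>R) t ` A) \<le> (\<Sum>i. ennreal (hausdorff_const s * diameter ((*\<^sub>R) t ` E i) powr s))"
    proof (rule hp_le_cover)
      show "(*\<^sub>R) t ` A \<subseteq> (\<Union>i. (*\<^sub>R) t ` E i)" using E(1) by blast
      show "diameter ((*\<^sub>R) t ` E i) \<le> d" for i
        using dm[of i] E(3)[of i] t by (simp add: field_simps)
    qed (use bd in auto)
    also have "\<dots> \<le> (\<Sum>i. ennreal (t powr s) * ennreal (hausdorff_const s * diameter (E i) powr s))"
    proof (intro suminf_le)
      fix i
      have "hausdorff_const s * diameter ((*\<^sub>R) t ` E i) powr s \<le> hausdorff_const s * (t * diameter (E i)) powr s"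
        by (intro mult_left_mono powr_mono2 hconst_nonneg s dm diameter_ge_0 bd)
      also have "\<dots> = t powr s * (hausdorff_const s * diameter (E i) powr s)"
        using t diameter_ge_0[OF E(2)[of i]] by (simp add: powr_mult)
      finally show "ennreal (hausdorff_const s * diameter ((*\<^sub>R) t ` E i) powr s) \<le> ennreal (t powr s) * ennreal (hausdorff_const s * diameter (E i) powr s)"
        using t by (simp add: ennreal_mult'[symmetric] ennreal_leI)
    qed auto
    also have "\<dots> = ennreal (t powr s) * (\<Sum>i. ennreal (hausdorff_const s * diameter (E i) powr s))"
      by (rule ennreal_suminf_cmult)
    finally show "hausdorff_pre s d ((*\<^sub>R) t ` A) \<le> ennreal (t powr s) * (\<Sum>i. ennreal (hausdorff_const s * diameter (E i) powr s))" .
  qed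
  also have "\<dots> \<le> ennreal (t powr s) * hausdorff_outer s A"
    using d t by (intro mult_left_mono hp_le_ho) auto
  finally show "hausdorff_pre s d ((*\<^sub>R) t ` A) \<le> ennreal (t powr s) * hausdorff_outer s A" .
qed

lemma ho_scale:
  fixes A :: "'a::euclidean_space set"
  assumes t: "0 < t" and s: "0 \<le> s"
  shows "hausdorff_outer s ((*\<^sub>R) t ` A) = ennreal (t powr s) * hausdorff_outer s A"
proof (rule antisym)
  show "hausdorff_outer s ((*\<^sub>R) t ` A) \<le> ennreal (t powr s) * hausdorff_outer s A"
    by (rule ho_scale_le[OF t s])
  have "(*\<^sub>R) (1/t) ` (*\<^sub>R) t ` A = A" using t by (auto simp: image_iff)
  then have "hausdorff_outer s A \<le> ennreal ((1/t) powr s) * hausdorff_outer s ((*\<^sub>R) t ` A)"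
    using ho_scale_le[of "1/t" s "(*\<^sub>R) t ` A"] t s by simp
  then have "ennreal (t powr s) * hausdorff_outer s A \<le> ennreal (t powr s) * (ennreal ((1/t) powr s) * hausdorff_outer s ((*\<^sub>R) t ` A))"
    by (rule mult_left_mono) simp
  also have "\<dots> = hausdorff_outer s ((*\<^sub>R) t ` A)"
    using t by (simp add: mult.assoc[symmetric] ennreal_mult'[symmetric] powr_divide)
  finally show "ennreal (t powr s) * hausdorff_outer s A \<le> hausdorff_outer s ((*\<^sub>R) t ` A)" .
qed

lemma hp_le_finite_cover:
  fixes A :: "'a::euclidean_space set"
  assumes F: "finite F" "A \<subseteq> \<Union>F" "\<And>E. E \<in> F \<Longrightarrow> bounded E \<and> diameter E \<le> d" and d: "0 \<le> d"
  shows "hausdorff_pre s d A \<le> (\<Sum>E\<in>F. ennreal (hausdorff_const s * diameter E powr s))"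
proof -
  obtain xs where xs: "set xs = F" "distinct xs" using finite_distinct_list[OF F(1)] by blast
  define E where "E i = (if i < length xs then xs ! i else {})" for i
  let ?g = "\<lambda>E. ennreal (hausdorff_const s * diameter E powr s)"
  have "hausdorff_pre s d A \<le> (\<Sum>i. ?g (E i))"
  proof (rule hp_le_cover)
    show "A \<subseteq> (\<Union>i. E i)"
    proof
      fix x assume "x \<in> A"
      then obtain S where "S \<in> F" "x \<in> S" using F(2) by blast
      then obtain i where "i < length xs" "xs ! i = S" using xs(1) by (auto simp: in_set_conv_nth)
      then show "x \<in> (\<Union>i. E i)" using \<open>x \<in> S\<close> unfolding E_def by (intro UN_I[of i]) auto
    qed
    show "bounded (E i)" for i using F(3) xs(1) unfolding E_def by auto
    show "diameter (E i) \<le> d" for i using F(3) xs(1) d unfolding E_def by auto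
  qed
  also have "(\<Sum>i. ?g (E i)) = (\<Sum>i<length xs. ?g (E i))"
    by (rule suminf_finite) (auto simp: E_def)
  also have "\<dots> = (\<Sum>i<length xs. ?g (xs ! i))" by (simp add: E_def)
  also have "\<dots> = (\<Sum>E\<in>F. ?g E)"
  proof -
    have inj: "inj_on (nth xs) {..<length xs}" using xs(2) by (simp add: inj_on_def nth_eq_iff_index_eq)
    have im: "nth xs ` {..<length xs} = F" using xs(1) by (auto simp: in_set_conv_nth)
    show ?thesis using sum.reindex[OF inj, of ?g] im by simp
  qed
  finally show ?thesis .
qed

lemma face_bound:
  fixes i :: "'a::euclidean_space"
  assumes i: "i \<in> Basis" and L: "0 < L" and dim: "DIM('a) \<ge> 2" and d: "0 < d"
  defines "m \<equiv> DIM('a) - 1"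
  shows "hausdorff_pre (real m) d {x. (\<forall>j\<in>Basis. \<bar>x \<bullet> j\<bar> \<le> L) \<and> x \<bullet> i = \<sigma>}
          \<le> ennreal (hausdorff_const (real m) * (real m * (2 * L)) ^ m)"
proof -
  let ?Face = "{x::'a. (\<forall>j\<in>Basis. \<bar>x \<bullet> j\<bar> \<le> L) \<and> x \<bullet> i = \<sigma>}"
  have m1: "m \<ge> 1" using dim unfolding m_def by auto
  have cardB: "card (Basis - {i}) = m" using i unfolding m_def by (simp add: card_Diff_singleton)
  define N :: nat where "N = nat (ceiling (real m * 2 * L / d)) + 1"
  have N1: "N \<ge> 1" unfolding N_def by auto
  define h where "h = 2 * L / real N"
  have hpos: "0 < h" using L N1 unfolding h_def by auto
  have Nh: "real N * h = 2 * L" using N1 unfolding h_def by auto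
  have mhd: "real m * h \<le> d"
  proof -
    have "real m * 2 * L / d \<le> real N" unfolding N_def by linarith
    then have "real m * 2 * L \<le> real N * d" using d by (simp add: field_simps)
    then show ?thesis using N1 d unfolding h_def by (simp add: field_simps)
  qed
  define P where "P = PiE (Basis - {i}) (\<lambda>_. {..<N})"
  define cell where "cell k = {x::'a. x \<bullet> i = \<sigma> \<and> (\<forall>j\<in>Basis - {i}. - L + real (k j) * h \<le> x \<bullet> j \<and> x \<bullet> j \<le> - L + (real (k j) + 1) * h)}" for k
  have finP: "finite P" unfolding P_def by (auto intro: finite_PiE)
  have cardP: "card P = N ^ m" unfolding P_def by (simp add: card_PiE cardB)
  have cover: "?Face \<subseteq> \<Union>(cell ` P)"
  proof
    fix x assume x: "x \<in> ?Face"
    define k where "k = restrict (\<lambda>j. min (N - 1) (nat \<lfloor>(x \<bullet> j + L) / h\<rfloor>)) (Basis - {i})"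
    have "k \<in> P" unfolding k_def P_def using N1 by auto
    moreover have "x \<in> cell k"
      unfolding cell_def
    proof (intro CollectI conjI ballI)
      show "x \<bullet> i = \<sigma>" using x by auto
      fix j assume j: "j \<in> Basis - {i}"
      define r where "r = (x \<bullet> j + L) / h"
      have r0: "0 \<le> r" "r \<le> real N" using x j hpos Nh unfolding r_def
        by (auto simp: field_simps)
      have kj: "k j = min (N - 1) (nat \<lfloor>r\<rfloor>)" unfolding k_def r_def using j by auto
      have "real (k j) \<le> r \<and> r \<le> real (k j) + 1"
      proof (cases "nat \<lfloor>r\<rfloor> \<le> N - 1")
        case True
        then have "k j = nat \<lfloor>r\<rfloor>" using kj by auto
        then show ?thesis using r0 by linarith
      next
        case False
        then have "k j = N - 1" using kj by auto
        moreover have "r \<ge> real N - 1" using False r0 N1 by linarith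
        ultimately show ?thesis using r0 N1 by (auto simp: of_nat_diff)
      qed
      then have "real (k j) * h \<le> x \<bullet> j + L \<and> x \<bullet> j + L \<le> (real (k j) + 1) * h"
        using hpos unfolding r_def by (auto simp: field_simps)
      then show "- L + real (k j) * h \<le> x \<bullet> j" "x \<bullet> j \<le> - L + (real (k j) + 1) * h" by auto
    qed
    ultimately show "x \<in> \<Union>(cell ` P)" by blast
  qed
  have cellbd: "bounded (cell k) \<and> diameter (cell k) \<le> real m * h" if k: "k \<in> P" for k
  proof
    have kN: "real (k j) + 1 \<le> real N" if "j \<in> Basis - {i}" for j
      using k that unfolding P_def by (auto simp: PiE_def Pi_def)
    have coord: "\<bar>x \<bullet> j\<bar> \<le> \<bar>\<sigma>\<bar> + 3 * L" if "x \<in> cell k" "j \<in> Basis" for x j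
    proof (cases "j = i")
      case True then show ?thesis using that L unfolding cell_def by auto
    next
      case False
      then have "- L + real (k j) * h \<le> x \<bullet> j" "x \<bullet> j \<le> - L + (real (k j) + 1) * h"
        using that unfolding cell_def by auto
      moreover have "(real (k j) + 1) * h \<le> 2 * L" using kN[of j] that False hpos Nh
        by (metis Diff_iff mult_right_mono order_less_imp_le singletonD)
      moreover have "0 \<le> real (k j) * h" using hpos by auto
      ultimately show ?thesis using L by auto
    qed
    show "bounded (cell k)"
      unfolding bounded_iff
    proof (intro exI ballI)
      fix x assume x: "x \<in> cell k"
      have "norm x \<le> (\<Sum>b\<in>Basis. \<bar>x \<bullet> b\<bar>)" by (rule norm_le_l1)
      also have "\<dots> \<le> (\<Sum>b\<in>(Basis::'a set). \<bar>\<sigma>\<bar> + 3 * L)" by (intro sum_mono coord x)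
      finally show "norm x \<le> (\<Sum>b\<in>(Basis::'a set). \<bar>\<sigma>\<bar> + 3 * L)" .
    qed
    show "diameter (cell k) \<le> real m * h"
    proof (rule diameter_le)
      show "cell k \<noteq> {} \<or> 0 \<le> real m * h" using hpos by auto
      fix x y assume x: "x \<in> cell k" and y: "y \<in> cell k"
      have "norm (x - y) \<le> (\<Sum>b\<in>Basis. \<bar>(x - y) \<bullet> b\<bar>)" by (rule norm_le_l1)
      also have "\<dots> = \<bar>(x - y) \<bullet> i\<bar> + (\<Sum>b\<in>Basis - {i}. \<bar>(x - y) \<bullet> b\<bar>)"
        using i by (simp add: sum.remove)
      also have "\<dots> \<le> 0 + (\<Sum>b\<in>Basis - {i}. h)"
      proof (intro add_mono sum_mono)
        show "\<bar>(x - y) \<bullet> i\<bar> \<le> 0" using x y unfolding cell_def by (simp add: inner_diff_left)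
        fix b assume b: "b \<in> Basis - {i}"
        have "- L + real (k b) * h \<le> x \<bullet> b" "x \<bullet> b \<le> - L + (real (k b) + 1) * h"
             "- L + real (k b) * h \<le> y \<bullet> b" "y \<bullet> b \<le> - L + (real (k b) + 1) * h"
          using x y b unfolding cell_def by auto
        then show "\<bar>(x - y) \<bullet> b\<bar> \<le> h" by (auto simp: inner_diff_left algebra_simps abs_le_iff)
      qed
      also have "\<dots> = real m * h" using cardB by simp
      finally show "norm (x - y) \<le> real m * h" .
    qed
  qed
  have "hausdorff_pre (real m) d ?Face \<le> (\<Sum>E\<in>cell ` P. ennreal (hausdorff_const (real m) * diameter E powr real m))"
  proof (rule hp_le_finite_cover[OF _ cover])
    show "finite (cell ` P)" using finP by simp
    show "0 \<le> d" using d by simp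
    fix E assume "E \<in> cell ` P"
    then obtain k where "k \<in> P" "E = cell k" by auto
    then show "bounded E \<and> diameter E \<le> d" using cellbd[of k] mhd by auto
  qed
  also have "\<dots> \<le> (\<Sum>E\<in>cell ` P. ennreal (hausdorff_const (real m) * (real m * h) ^ m))"
  proof (intro sum_mono ennreal_leI mult_left_mono hconst_nonneg)
    fix E assume "E \<in> cell ` P"
    then obtain k where "k \<in> P" "E = cell k" by auto
    then have "bounded E" "diameter E \<le> real m * h" using cellbd by auto
    then have "diameter E powr real m \<le> (real m * h) powr real m"
      by (intro powr_mono2 diameter_ge_0) auto
    also have "\<dots> = (real m * h) ^ m" using m1 hpos by (simp add: powr_realpow)
    finally show "diameter E powr real m \<le> (real m * h) ^ m" .
  qed auto
  also have "\<dots> = of_nat (card (cell ` P)) * ennreal (hausdorff_const (real m) * (real m * h) ^ m)"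
    by (rule sum_constant)
  also have "\<dots> \<le> of_nat (card P) * ennreal (hausdorff_const (real m) * (real m * h) ^ m)"
    by (intro mult_right_mono of_nat_mono card_image_le finP) simp
  also have "\<dots> = ennreal (real N ^ m) * ennreal (hausdorff_const (real m) * (real m * h) ^ m)"
    unfolding cardP by (simp only: ennreal_of_nat_eq_real_of_nat of_nat_power)
  also have "\<dots> = ennreal (real N ^ m * (hausdorff_const (real m) * (real m * h) ^ m))"
    by (rule ennreal_mult''[symmetric]) (use hconst_nonneg[of "real m"] hpos in simp)
  also have "real N ^ m * (hausdorff_const (real m) * (real m * h) ^ m) = hausdorff_const (real m) * (real m * (2 * L)) ^ m"
  proof -
    have "(real m * (2 * L)) ^ m = real N ^ m * (real m * h) ^ m"
      unfolding Nh[symmetric] by (simp add: power_mult_distrib)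
    then show ?thesis by simp
  qed
  finally show ?thesis .
qed

lemma closed_cube: "closed {x::'a::euclidean_space. (\<forall>j\<in>Basis. \<bar>x \<bullet> j\<bar> \<le> L) \<and> P x}" if "closed {x. P x}"
proof -
  have "{x::'a. (\<forall>j\<in>Basis. \<bar>x \<bullet> j\<bar> \<le> L) \<and> P x} = (\<Inter>j\<in>Basis. {x. \<bar>x \<bullet> j\<bar> \<le> L}) \<inter> {x. P x}" by auto
  moreover have "closed (\<Inter>j\<in>Basis. {x::'a. \<bar>x \<bullet> j\<bar> \<le> L})"
    by (intro closed_INT ballI closed_Collect_le continuous_intros)
  ultimately show ?thesis using that by (simp add: closed_Int)
qed

lemma frontier_cube:
  fixes L :: real
  shows "frontier {x::'a::euclidean_space. \<forall>j\<in>Basis. \<bar>x \<bullet> j\<bar> \<le> L}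
     \<subseteq> (\<Union>i\<in>Basis. {x. (\<forall>j\<in>Basis. \<bar>x \<bullet> j\<bar> \<le> L) \<and> x \<bullet> i = L} \<union> {x. (\<forall>j\<in>Basis. \<bar>x \<bullet> j\<bar> \<le> L) \<and> x \<bullet> i = - L})"
proof -
  let ?Q = "{x::'a. \<forall>j\<in>Basis. \<bar>x \<bullet> j\<bar> \<le> L}"
  have cl: "closed ?Q" using closed_cube[of "\<lambda>_. True" L] by simp
  have op: "open {x::'a. \<forall>j\<in>Basis. \<bar>x \<bullet> j\<bar> < L}"
  proof -
    have "{x::'a. \<forall>j\<in>Basis. \<bar>x \<bullet> j\<bar> < L} = (\<Inter>j\<in>Basis. {x. \<bar>x \<bullet> j\<bar> < L})" by auto
    moreover have "open (\<Inter>j\<in>Basis. {x::'a. \<bar>x \<bullet> j\<bar> < L})"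
      by (intro open_INT finite_Basis ballI open_Collect_less continuous_intros)
    ultimately show ?thesis by simp
  qed
  have "{x::'a. \<forall>j\<in>Basis. \<bar>x \<bullet> j\<bar> < L} \<subseteq> interior ?Q"
    by (rule interior_maximal[OF _ op]) auto
  then have "frontier ?Q \<subseteq> ?Q - {x::'a. \<forall>j\<in>Basis. \<bar>x \<bullet> j\<bar> < L}"
    unfolding frontier_def using closure_closed[OF cl] by auto
  also have "\<dots> \<subseteq> (\<Union>i\<in>Basis. {x. (\<forall>j\<in>Basis. \<bar>x \<bullet> j\<bar> \<le> L) \<and> x \<bullet> i = L} \<union> {x. (\<forall>j\<in>Basis. \<bar>x \<bullet> j\<bar> \<le> L) \<and> x \<bullet> i = - L})"
  proof
    fix x assume x: "x \<in> ?Q - {x::'a. \<forall>j\<in>Basis. \<bar>x \<bullet> j\<bar> < L}"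
    then obtain i where i: "i \<in> Basis" "\<not> \<bar>x \<bullet> i\<bar> < L" by auto
    then have "\<bar>x \<bullet> i\<bar> = L" using x by force
    then have "x \<bullet> i = L \<or> x \<bullet> i = - L" by linarith
    then show "x \<in> (\<Union>i\<in>Basis. {x. (\<forall>j\<in>Basis. \<bar>x \<bullet> j\<bar> \<le> L) \<and> x \<bullet> i = L} \<union> {x. (\<forall>j\<in>Basis. \<bar>x \<bullet> j\<bar> \<le> L) \<and> x \<bullet> i = - L})"
      using x i(1) by blast
  qed
  finally show ?thesis .
qed

lemma norm_add_sq: "(norm (a + b))\<^sup>2 = (norm a)\<^sup>2 + (norm b)\<^sup>2 + 2 * (a \<bullet> b)" for a b :: "'a::real_inner"
  by (simp add: power2_norm_eq_inner inner_add_left inner_add_right inner_commute)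

lemma frontier_convex_in_proj:
  fixes D :: "'a::euclidean_space set"
  assumes D: "convex D" "closed D" "aff_dim D = DIM('a)" "D \<subseteq> Q" "bounded Q"
  shows "frontier D \<subseteq> closest_point D ` frontier Q"
proof
  fix p assume p: "p \<in> frontier D"
  have pD: "p \<in> D" using p D(2) frontier_subset_closed by blast
  have ne: "D \<noteq> {}" using pD by auto
  have intD: "interior D = rel_interior D" using D(3) interior_rel_interior_gen[of D] by simp
  have nri: "p \<notin> rel_interior D" using p intD unfolding frontier_def by auto
  have pcl: "p \<in> closure D" using pD closure_subset by blast
  obtain a where a: "a \<noteq> 0" "\<And>y. y \<in> closure D \<Longrightarrow> a \<bullet> p \<le> a \<bullet> y"
    "\<And>y. y \<in> rel_interior D \<Longrightarrow> a \<bullet> p < a \<bullet> y"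
    using supporting_hyperplane_relative_frontier[OF D(1) pcl nri] by blast
  have aD: "a \<bullet> p \<le> a \<bullet> y" if "y \<in> D" for y using a(2) that closure_subset by (meson subsetD)
  define v where "v = - a"
  have vpos: "0 < norm v" using a(1) unfolding v_def by simp
  obtain B where B: "\<And>x. x \<in> Q \<Longrightarrow> norm x \<le> B" using D(5) unfolding bounded_iff by blast
  define s0 where "s0 = (\<bar>B\<bar> + norm p + 1) / norm v"
  have s0: "0 \<le> s0" using vpos unfolding s0_def by simp
  have far: "p + s0 *\<^sub>R v \<notin> Q"
  proof
    assume "p + s0 *\<^sub>R v \<in> Q"
    then have "norm (p + s0 *\<^sub>R v) \<le> B" using B by blast
    moreover have "norm (s0 *\<^sub>R v) = \<bar>B\<bar> + norm p + 1" using vpos s0 unfolding s0_def by simp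
    moreover have "norm (s0 *\<^sub>R v) \<le> norm (p + s0 *\<^sub>R v) + norm p"
      using norm_triangle_ineq4[of "p + s0 *\<^sub>R v" p] by simp
    ultimately show False by linarith
  qed
  have "closed_segment p (p + s0 *\<^sub>R v) \<inter> frontier Q \<noteq> {}"
  proof (rule connected_Int_frontier)
    show "closed_segment p (p + s0 *\<^sub>R v) \<inter> Q \<noteq> {}" using pD D(4) by auto
    show "closed_segment p (p + s0 *\<^sub>R v) - Q \<noteq> {}" using far by auto
  qed simp
  then obtain q where q: "q \<in> closed_segment p (p + s0 *\<^sub>R v)" "q \<in> frontier Q" by blast
  then obtain u where u: "0 \<le> u" "q = p + (u * s0) *\<^sub>R v"
    unfolding in_segment by (auto simp: algebra_simps)
  have "p = closest_point D q"
  proof (rule closest_point_unique[OF D(1) D(2) pD], intro ballI)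
    fix z assume z: "z \<in> D"
    have qp: "q - p = (- (u * s0)) *\<^sub>R a" using u unfolding v_def by simp
    have "(q - p) \<bullet> (p - z) = (u * s0) * (a \<bullet> z - a \<bullet> p)"
      unfolding qp by (simp add: inner_diff_right algebra_simps)
    then have ip: "0 \<le> (q - p) \<bullet> (p - z)"
      using aD[OF z] u s0 by (metis diff_ge_0_iff_ge mult_nonneg_nonneg)
    have "(norm (q - p))\<^sup>2 \<le> (norm (q - z))\<^sup>2"
    proof -
      have e: "q - z = (q - p) + (p - z)" by simp
      have "(norm ((q - p) + (p - z)))\<^sup>2 = (norm (q - p))\<^sup>2 + (norm (p - z))\<^sup>2 + 2 * ((q - p) \<bullet> (p - z))"
        by (rule norm_add_sq)
      then have "(norm (q - z))\<^sup>2 = (norm (q - p))\<^sup>2 + (norm (p - z))\<^sup>2 + 2 * ((q - p) \<bullet> (p - z))"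
        by (simp only: e)
      then show ?thesis using ip by simp
    qed
    then show "dist q p \<le> dist q z" using power2_le_imp_le[OF _ norm_ge_zero] by (simp add: dist_norm)
  qed
  then show "p \<in> closest_point D ` frontier Q" using q(2) by blast
qed

lemma hm_sets:
  "sets (hausdorff_measure s :: 'a::euclidean_space measure) = sets borel"
  unfolding hausdorff_measure_def
  by (subst sets_measure_of) (auto simp: sets.sigma_sets_eq[of borel, simplified])

lemma hm_space:
  "space (hausdorff_measure s :: 'a::euclidean_space measure) = UNIV"
  unfolding hausdorff_measure_def by (simp add: space_measure_of_conv)

lemma hm_emeasure:
  assumes good: "measure_space (UNIV::'a::euclidean_space set) (sets borel) (hausdorff_outer s)"
    and A: "A \<in> sets borel"
  shows "emeasure (hausdorff_measure s :: 'a measure) A = hausdorff_outer s A"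
  unfolding hausdorff_measure_def emeasure_measure_of_conv
  using good A by (simp add: sets.sigma_sets_eq[of borel, simplified])

lemma hm_bad:
  assumes bad: "\<not> measure_space (UNIV::'a::euclidean_space set) (sets borel) (hausdorff_outer s)"
  shows "emeasure (hausdorff_measure s :: 'a measure) A = 0"
  unfolding hausdorff_measure_def emeasure_measure_of_conv
  using bad by (simp add: sets.sigma_sets_eq[of borel, simplified])

lemma frontier_convex_finite:
  fixes D :: "'a::euclidean_space set"
  assumes good: "measure_space (UNIV::'a set) (sets borel) (hausdorff_outer (real (DIM('a) - 1)))"
    and dim: "DIM('a) \<ge> 2"
    and D: "convex D" "compact D" "aff_dim D = DIM('a)"
  shows "emeasure (hausdorff_measure (real (DIM('a) - 1)) :: 'a measure) (frontier D) < \<infinity>"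
proof -
  define m where "m = DIM('a) - 1"
  let ?\<mu> = "hausdorff_measure (real m) :: 'a measure"
  have good': "measure_space (UNIV::'a set) (sets borel) (hausdorff_outer (real m))"
    using good unfolding m_def .
  obtain B where B: "\<And>x. x \<in> D \<Longrightarrow> norm x \<le> B" using compact_imp_bounded[OF D(2)] unfolding bounded_iff by blast
  define L where "L = \<bar>B\<bar> + 1"
  have L: "0 < L" unfolding L_def by simp
  define Q where "Q = {x::'a. \<forall>j\<in>Basis. \<bar>x \<bullet> j\<bar> \<le> L}"
  have DQ: "D \<subseteq> Q" unfolding Q_def L_def
  proof (intro subsetI CollectI ballI)
    fix x j assume "x \<in> D" "j \<in> (Basis::'a set)"
    then show "\<bar>x \<bullet> j\<bar> \<le> \<bar>B\<bar> + 1" using B[of x] Basis_le_norm[of j x] by linarith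
  qed
  have bQ: "bounded Q" unfolding bounded_iff
  proof (intro exI ballI)
    fix x assume x: "x \<in> Q"
    have "norm x \<le> (\<Sum>b\<in>Basis. \<bar>x \<bullet> b\<bar>)" by (rule norm_le_l1)
    also have "\<dots> \<le> (\<Sum>b\<in>(Basis::'a set). L)" using x unfolding Q_def by (intro sum_mono) auto
    finally show "norm x \<le> (\<Sum>b\<in>(Basis::'a set). L)" .
  qed
  define F where "F i \<sigma> = {x::'a. (\<forall>j\<in>Basis. \<bar>x \<bullet> j\<bar> \<le> L) \<and> x \<bullet> i = \<sigma>}" for i \<sigma>
  define X where "X = ennreal (hausdorff_const (real m) * (real m * (2 * L)) ^ m)"
  have Fb: "F i \<sigma> \<in> sets borel" for i \<sigma>
  proof -
    have "closed {x::'a. x \<bullet> i = \<sigma>}" by (intro closed_Collect_eq continuous_intros)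
    then have "closed (F i \<sigma>)" unfolding F_def by (rule closed_cube)
    then show ?thesis by (rule borel_closed)
  qed
  have FX: "emeasure ?\<mu> (F i \<sigma>) \<le> X" if i: "i \<in> Basis" for i \<sigma>
  proof -
    have "emeasure ?\<mu> (F i \<sigma>) = hausdorff_outer (real m) (F i \<sigma>)"
      by (rule hm_emeasure[OF good' Fb])
    also have "\<dots> \<le> X"
      unfolding X_def F_def m_def
      by (rule ho_le, rule face_bound[OF i L dim]) 
    finally show ?thesis .
  qed
  have Dne: "D \<noteq> {}" using D(3) by auto
  have "frontier D \<subseteq> closest_point D ` frontier Q"
    by (rule frontier_convex_in_proj[OF D(1) compact_imp_closed[OF D(2)] D(3) DQ bQ])
  have "emeasure ?\<mu> (frontier D) = hausdorff_outer (real m) (frontier D)"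
    by (rule hm_emeasure[OF good' borel_closed[OF frontier_closed]])
  also have "\<dots> \<le> hausdorff_outer (real m) (closest_point D ` frontier Q)"
    by (rule ho_mono) fact
  also have "\<dots> \<le> hausdorff_outer (real m) (frontier Q)"
  proof (rule ho_lipschitz)
    show "dist (closest_point D x) (closest_point D y) \<le> dist x y" for x y
      by (rule closest_point_lipschitz[OF D(1) compact_imp_closed[OF D(2)] Dne])
  qed simp
  also have "\<dots> = emeasure ?\<mu> (frontier Q)"
    by (rule hm_emeasure[OF good' borel_closed[OF frontier_closed], symmetric])
  also have "\<dots> \<le> emeasure ?\<mu> (\<Union>i\<in>Basis. F i L \<union> F i (- L))"
    by (rule emeasure_mono) (use frontier_cube[of L] in \<open>auto simp: Q_def F_def hm_sets Fb\<close>)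
  also have "\<dots> \<le> (\<Sum>i\<in>Basis. emeasure ?\<mu> (F i L \<union> F i (- L)))"
    by (rule emeasure_subadditive_finite) (auto simp: hm_sets Fb)
  also have "\<dots> \<le> (\<Sum>i\<in>(Basis::'a set). X + X)"
  proof (rule sum_mono)
    fix i :: 'a assume i: "i \<in> Basis"
    have "emeasure ?\<mu> (F i L \<union> F i (- L)) \<le> emeasure ?\<mu> (F i L) + emeasure ?\<mu> (F i (- L))"
      by (rule emeasure_subadditive) (auto simp: hm_sets Fb)
    also have "\<dots> \<le> X + X" by (intro add_mono FX i)
    finally show "emeasure ?\<mu> (F i L \<union> F i (- L)) \<le> X + X" .
  qed
  also have "\<dots> < \<infinity>" unfolding X_def by (simp add: ennreal_mult_less_top of_nat_less_top)
  finally show ?thesis unfolding m_def .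
qed

definition Kt :: "'a::euclidean_space set \<Rightarrow> 'a \<Rightarrow> real \<Rightarrow> 'a set" where
  "Kt C u t = {x\<in>C. x \<bullet> u \<le> - t}"
definition Ft :: "'a::euclidean_space set \<Rightarrow> 'a \<Rightarrow> real \<Rightarrow> 'a set" where
  "Ft C u t = {x\<in>C. x \<bullet> u = - t}"
definition Et :: "'a::euclidean_space set \<Rightarrow> 'a \<Rightarrow> real \<Rightarrow> 'a set" where
  "Et C u t = Ft C u t - interior C"
definition Dt :: "'a::euclidean_space set \<Rightarrow> 'a \<Rightarrow> real \<Rightarrow> 'a set" where
  "Dt C u t = {x\<in>C. - 2 * t \<le> x \<bullet> u \<and> x \<bullet> u \<le> - t}"

lemma polar_neg:
  fixes C :: "'a::euclidean_space set"
  assumes u: "u \<in> interior (polar_cone C)"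
  shows "\<exists>e>0. \<forall>x\<in>C. u \<bullet> x \<le> - e * norm x"
proof -
  obtain r where r: "r > 0" "ball u r \<subseteq> polar_cone C" using u by (auto simp: mem_interior)
  show ?thesis
  proof (intro exI[of _ "r/2"] conjI ballI)
    show "0 < r / 2" using r by simp
    fix x assume x: "x \<in> C"
    show "u \<bullet> x \<le> - (r / 2) * norm x"
    proof (cases "x = 0")
      case True then show ?thesis by simp
    next
      case False
      let ?w = "u + (r / 2 / norm x) *\<^sub>R x"
      have "dist u ?w = norm ((r / 2 / norm x) *\<^sub>R x)" by (simp add: dist_norm)
      also have "\<dots> = r / 2" using False r by simp
      finally have "dist u ?w < r" using r by simp
      then have "?w \<in> polar_cone C" using r by auto
      then have "?w \<bullet> x \<le> 0" using x unfolding polar_cone_def by auto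
      moreover have "?w \<bullet> x = u \<bullet> x + (r / 2) * norm x"
        using False by (simp add: inner_add_left power2_norm_eq_inner[symmetric] power2_eq_square)
      ultimately show ?thesis by simp
    qed
  qed
qed

lemma cone_interior_scale:
  fixes C :: "'a::euclidean_space set"
  assumes "cone C" "0 < c" "x \<in> interior C"
  shows "c *\<^sub>R x \<in> interior C"
proof -
  obtain r where r: "r > 0" "ball x r \<subseteq> C" using assms(3) by (auto simp: mem_interior)
  have "ball (c *\<^sub>R x) (c * r) \<subseteq> C"
  proof
    fix y assume "y \<in> ball (c *\<^sub>R x) (c * r)"
    then have "dist (c *\<^sub>R x) y < c * r" by simp
    then have "dist x ((1/c) *\<^sub>R y) < r"
    proof -
      have "c *\<^sub>R x - y = c *\<^sub>R (x - (1/c) *\<^sub>R y)" using assms(2) by (simp add: algebra_simps)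
      then have "dist (c *\<^sub>R x) y = c * dist x ((1/c) *\<^sub>R y)"
        using assms(2) by (simp add: dist_norm)
      then show ?thesis using \<open>dist (c *\<^sub>R x) y < c * r\<close> assms(2) by simp
    qed
    then have "(1/c) *\<^sub>R y \<in> C" using r by auto
    then have "c *\<^sub>R ((1/c) *\<^sub>R y) \<in> C" using assms(1,2) unfolding cone_def by (meson less_imp_le)
    then show "y \<in> C" using assms(2) by simp
  qed
  moreover have "0 < c * r" using r assms(2) by simp
  ultimately show ?thesis unfolding mem_interior by blast
qed

locale cs =
  fixes C :: "'a::euclidean_space set" and u0 :: 'a
  assumes Ccl: "closed C" and Ccv: "convex C" and Cco: "cone C"
    and Cdim: "aff_dim C = DIM('a)" and u0: "u0 \<in> Omega C"
begin

lemma u0_norm: "norm u0 = 1" using u0 unfolding Omega_def by auto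
lemma u0_int: "u0 \<in> interior (polar_cone C)" using u0 unfolding Omega_def by auto
lemma u0_polar: "x \<in> C \<Longrightarrow> x \<bullet> u0 \<le> 0"
  using interior_subset[of "polar_cone C"] u0_int unfolding polar_cone_def by (auto simp: inner_commute)

lemma C_ne: "C \<noteq> {}" using Cdim by auto
lemma zero_in_C: "0 \<in> C"
proof -
  obtain x where "x \<in> C" using C_ne by auto
  then show ?thesis using Cco unfolding cone_def by (metis order_refl scaleR_zero_left)
qed

lemma C_add: "x \<in> C \<Longrightarrow> y \<in> C \<Longrightarrow> x + y \<in> C"
proof -
  assume "x \<in> C" "y \<in> C"
  then have "(1/2) *\<^sub>R x + (1/2) *\<^sub>R y \<in> C" using Ccv unfolding convex_def by auto
  then have "2 *\<^sub>R ((1/2) *\<^sub>R x + (1/2) *\<^sub>R y) \<in> C" using Cco unfolding cone_def by auto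
  then show ?thesis by (simp add: scaleR_add_right)
qed

lemma C_scale: "x \<in> C \<Longrightarrow> 0 \<le> c \<Longrightarrow> c *\<^sub>R x \<in> C" using Cco unfolding cone_def by auto

lemma exists_nonzero: "\<exists>x\<in>C. x \<noteq> 0"
proof (rule ccontr)
  assume "\<not> ?thesis"
  then have "C = {0}" using zero_in_C by auto
  then show False using Cdim by simp
qed

lemma eps_bound: "\<exists>e>0. \<forall>x\<in>C. x \<bullet> u0 \<le> - e * norm x"
  using polar_neg[OF u0_int] by (simp add: inner_commute)

lemma neg_inner: "x \<in> C \<Longrightarrow> x \<noteq> 0 \<Longrightarrow> x \<bullet> u0 < 0"
proof -
  assume "x \<in> C" "x \<noteq> 0"
  obtain e where "e > 0" "\<forall>x\<in>C. x \<bullet> u0 \<le> - e * norm x" using eps_bound by auto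
  have "0 < e * norm x" using \<open>e > 0\<close> \<open>x \<noteq> 0\<close> by simp
  then show ?thesis using \<open>x \<in> C\<close> \<open>\<forall>x\<in>C. x \<bullet> u0 \<le> - e * norm x\<close> by force
qed

lemma level_point: "0 < t \<Longrightarrow> \<exists>p\<in>C. p \<bullet> u0 = - t"
proof -
  assume t: "0 < t"
  obtain x where x: "x \<in> C" "x \<noteq> 0" using exists_nonzero by auto
  have n: "x \<bullet> u0 < 0" by (rule neg_inner[OF x])
  let ?p = "(t / (- (x \<bullet> u0))) *\<^sub>R x"
  have "t / (x \<bullet> u0) < 0" using divide_pos_neg[OF t n] .
  then have "?p \<in> C" by (intro C_scale[OF x(1)]) simp
  moreover have "?p \<bullet> u0 = - t" using n by simp
  ultimately show ?thesis by blast
qed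

lemma bounded_level: "0 < t \<Longrightarrow> bounded {x\<in>C. - t \<le> x \<bullet> u0}"
proof -
  assume t: "0 < t"
  obtain e where e: "e > 0" "\<forall>x\<in>C. x \<bullet> u0 \<le> - e * norm x" using eps_bound by auto
  show ?thesis unfolding bounded_iff
  proof (intro exI ballI)
    fix x assume "x \<in> {x\<in>C. - t \<le> x \<bullet> u0}"
    then have "- t \<le> - e * norm x" using e by force
    then show "norm x \<le> t / e" using e by (simp add: field_simps)
  qed
qed

lemma Kt_eq: "Kt C u0 t = C \<inter> {x. u0 \<bullet> x \<le> - t}" unfolding Kt_def by (auto simp: inner_commute)

lemma Kt_KCw:
  assumes t: "0 < t" and w: "u0 \<in> \<omega>" "\<omega> \<subseteq> Omega C"
  shows "Kt C u0 t \<in> KCw C \<omega>"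
proof -
  let ?K = "Kt C u0 t"
  obtain p where p: "p \<in> C" "p \<bullet> u0 = - t" using level_point[OF t] by auto
  have pK: "p \<in> ?K" using p unfolding Kt_def by auto
  have cl: "closed ?K" unfolding Kt_eq by (intro closed_Int Ccl closed_Collect_le continuous_intros)
  have cv: "convex ?K" unfolding Kt_eq by (intro convex_Int Ccv convex_halfspace_le)
  have z: "0 \<notin> ?K" using t unfolding Kt_def by auto
  have sc: "\<forall>c::real. c \<ge> 1 \<longrightarrow> (\<lambda>y. c *\<^sub>R y) ` ?K \<subseteq> ?K"
  proof (intro allI impI subsetI)
    fix c :: real and x assume c: "c \<ge> 1" and "x \<in> (\<lambda>y. c *\<^sub>R y) ` ?K"
    then obtain y where y: "y \<in> C" "y \<bullet> u0 \<le> - t" "x = c *\<^sub>R y" unfolding Kt_def by auto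
    have "(c - 1) * (y \<bullet> u0) \<le> 0" using c y t by (intro mult_nonneg_nonpos) auto
    then have "c * (y \<bullet> u0) \<le> y \<bullet> u0" by (simp add: algebra_simps)
    then show "x \<in> ?K" using y c C_scale[of y c] unfolding Kt_def by auto
  qed
  have rc: "recession_cone ?K = C"
  proof
    show "C \<subseteq> recession_cone ?K"
    proof (intro subsetI)
      fix z assume z: "z \<in> C"
      show "z \<in> recession_cone ?K" unfolding recession_cone_def
      proof (intro CollectI subsetI)
        fix x assume "x \<in> (\<lambda>y. y + z) ` ?K"
        then obtain y where y: "y \<in> C" "y \<bullet> u0 \<le> - t" "x = y + z" unfolding Kt_def by auto
        then show "x \<in> ?K" using C_add[OF y(1) z] u0_polar[OF z] unfolding Kt_def by (auto simp: inner_add_left)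
      qed
    qed
    show "recession_cone ?K \<subseteq> C"
    proof
      fix z assume "z \<in> recession_cone ?K"
      then have zK: "\<And>y. y \<in> ?K \<Longrightarrow> y + z \<in> ?K" unfolding recession_cone_def by auto
      have pn: "p + real n *\<^sub>R z \<in> ?K" for n
      proof (induction n)
        case 0 then show ?case using pK by simp
      next
        case (Suc n)
        have "p + real (Suc n) *\<^sub>R z = (p + real n *\<^sub>R z) + z" by (simp add: algebra_simps)
        then show ?case using zK[OF Suc.IH] by (simp only:)
      qed
      show "z \<in> C"
      proof (rule ccontr)
        assume "z \<notin> C"
        then obtain a b where ab: "a \<bullet> z < b" "\<forall>x\<in>C. a \<bullet> x > b"
          using separating_hyperplane_closed_point[OF Ccv Ccl] by blast
        have b0: "b < 0" using ab(2) zero_in_C by auto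
        define n where "n = nat \<lceil>(a \<bullet> p - b) / (b - a \<bullet> z)\<rceil> + 1"
        have "p + real n *\<^sub>R z \<in> C" using pn[of n] unfolding Kt_def by auto
        then have "a \<bullet> p + real n * (a \<bullet> z) > b" using ab(2) by (auto simp: inner_add_right)
        moreover have "real n > (a \<bullet> p - b) / (b - a \<bullet> z)" unfolding n_def by linarith
        then have "real n * (b - a \<bullet> z) > a \<bullet> p - b" using ab(1) by (simp add: field_simps)
        moreover have "real n * b \<le> 0" using b0 by (simp add: mult_nonneg_nonpos)
        ultimately show False by (simp add: algebra_simps)
      qed
    qed
  qed
  have bdd: "bdd_above ((\<lambda>y. u \<bullet> y) ` ?K)" if "u \<in> Omega C" for u
  proof -
    have "u \<in> polar_cone C" using that interior_subset unfolding Omega_def by auto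
    then have "\<forall>y\<in>?K. u \<bullet> y \<le> 0" unfolding polar_cone_def Kt_def by auto
    then show ?thesis by (auto intro: bdd_aboveI2)
  qed
  have eq: "?K = C \<inter> (\<Inter>u\<in>\<omega>. half_space_K ?K u)"
  proof
    show "?K \<subseteq> C \<inter> (\<Inter>u\<in>\<omega>. half_space_K ?K u)"
    proof
      fix x assume x: "x \<in> ?K"
      have "x \<in> half_space_K ?K u" if u: "u \<in> \<omega>" for u
      proof -
        have "u \<bullet> x \<le> Sup ((\<lambda>y. u \<bullet> y) ` ?K)" using bdd[of u] u w x by (intro cSup_upper) auto
        then show ?thesis unfolding half_space_K_def support_fun_def by (simp add: inner_commute)
      qed
      then show "x \<in> C \<inter> (\<Inter>u\<in>\<omega>. half_space_K ?K u)" using x unfolding Kt_def by auto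
    qed
    show "C \<inter> (\<Inter>u\<in>\<omega>. half_space_K ?K u) \<subseteq> ?K"
    proof
      fix x assume x: "x \<in> C \<inter> (\<Inter>u\<in>\<omega>. half_space_K ?K u)"
      then have "x \<bullet> u0 \<le> support_fun ?K u0" using w unfolding half_space_K_def by auto
      also have "support_fun ?K u0 \<le> - t" unfolding support_fun_def
        using pK by (intro cSup_least) (auto simp: Kt_def inner_commute)
      finally show "x \<in> ?K" using x unfolding Kt_def by auto
    qed
  qed
  show ?thesis unfolding KCw_def C_pseudo_cone_def pseudo_cone_def
    using pK cl cv z sc rc eq by blast
qed

lemma Kt_neq:
  assumes "0 < t1" "t1 < t2"
  shows "Kt C u0 t1 \<noteq> Kt C u0 t2"
proof -
  obtain p where p: "p \<in> C" "p \<bullet> u0 = - t1" using level_point[OF assms(1)] by auto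
  then have "p \<in> Kt C u0 t1" "p \<notin> Kt C u0 t2" using assms unfolding Kt_def by auto
  then show ?thesis by blast
qed

lemma normal_in_F:
  assumes t: "0 < t" and eta: "\<eta> \<subseteq> Omega C"
  shows "rev_gauss_image (Kt C u0 t) \<eta> \<subseteq> Ft C u0 t"
proof
  let ?K = "Kt C u0 t"
  fix x assume "x \<in> rev_gauss_image ?K \<eta>"
  then obtain v where x: "x \<in> frontier ?K" and v: "v \<in> \<eta>" "outer_unit_normal ?K x v"
    unfolding rev_gauss_image_def by auto
  have cl: "closed ?K" unfolding Kt_eq by (intro closed_Int Ccl closed_Collect_le continuous_intros)
  have xK: "x \<in> ?K" using x cl frontier_subset_closed by blast
  then have xC: "x \<in> C" and xu: "x \<bullet> u0 \<le> - t" unfolding Kt_def by auto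
  have nv: "\<And>y. y \<in> ?K \<Longrightarrow> (y - x) \<bullet> v \<le> 0" using v(2) unfolding outer_unit_normal_def by auto
  show "x \<in> Ft C u0 t"
  proof (rule ccontr)
    assume "x \<notin> Ft C u0 t"
    then have lt: "x \<bullet> u0 < - t" using xC xu unfolding Ft_def by auto
    define \<delta> where "\<delta> = - t - x \<bullet> u0"
    have \<delta>: "0 < \<delta>" using lt unfolding \<delta>_def by simp
    have allC: "(y - x) \<bullet> v \<le> 0" if y: "y \<in> C" for y
    proof -
      define \<epsilon> where "\<epsilon> = min 1 (\<delta> / (1 + \<bar>(y - x) \<bullet> u0\<bar>))"
      have e0: "0 < \<epsilon>" "\<epsilon> \<le> 1" using \<delta> unfolding \<epsilon>_def by auto
      have e1: "\<epsilon> * \<bar>(y - x) \<bullet> u0\<bar> \<le> \<delta>"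
      proof -
        have "\<epsilon> * \<bar>(y - x) \<bullet> u0\<bar> \<le> \<epsilon> * (1 + \<bar>(y - x) \<bullet> u0\<bar>)" using e0 by simp
        also have "\<dots> \<le> \<delta> / (1 + \<bar>(y - x) \<bullet> u0\<bar>) * (1 + \<bar>(y - x) \<bullet> u0\<bar>)"
          unfolding \<epsilon>_def by (intro mult_right_mono) auto
        also have "\<dots> = \<delta>" by (simp add: add_pos_nonneg)
        finally show ?thesis .
      qed
      define z where "z = x + \<epsilon> *\<^sub>R (y - x)"
      have "z = (1 - \<epsilon>) *\<^sub>R x + \<epsilon> *\<^sub>R y" unfolding z_def by (simp add: algebra_simps)
      then have zC: "z \<in> C" using Ccv xC y e0 unfolding convex_def by auto
      have "z \<bullet> u0 = x \<bullet> u0 + \<epsilon> * ((y - x) \<bullet> u0)" unfolding z_def by (simp add: inner_add_left)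
      also have "\<dots> \<le> x \<bullet> u0 + \<epsilon> * \<bar>(y - x) \<bullet> u0\<bar>" using e0 by (intro add_left_mono mult_left_mono) auto
      also have "\<dots> \<le> - t" using e1 unfolding \<delta>_def by simp
      finally have "z \<in> ?K" using zC unfolding Kt_def by auto
      then have "(z - x) \<bullet> v \<le> 0" by (rule nv)
      then have "\<epsilon> * ((y - x) \<bullet> v) \<le> 0" unfolding z_def by simp
      then show ?thesis using e0 by (simp add: mult_le_0_iff)
    qed
    have "(0 - x) \<bullet> v \<le> 0" by (rule allC[OF zero_in_C])
    moreover have "(2 *\<^sub>R x - x) \<bullet> v \<le> 0" by (rule allC[OF C_scale[OF xC]]) simp
    ultimately have xv: "v \<bullet> x = 0" by (simp add: inner_commute algebra_simps)
    have "v \<in> interior (polar_cone C)" using v(1) eta unfolding Omega_def by auto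
    then obtain e where e: "e > 0" "\<forall>y\<in>C. v \<bullet> y \<le> - e * norm y" using polar_neg by blast
    then have "e * norm x \<le> 0" using xC xv by force
    then have "x = 0" using e(1) by (simp add: mult_le_0_iff)
    then show False using lt t by simp
  qed
qed

lemma normal_interior:
  assumes t: "0 < t" and x: "x \<in> Ft C u0 t" "x \<in> interior C"
  shows "x \<in> rev_gauss_image (Kt C u0 t) \<eta> \<longleftrightarrow> u0 \<in> \<eta>"
proof
  let ?K = "Kt C u0 t"
  have xC: "x \<in> C" and xu: "x \<bullet> u0 = - t" using x unfolding Ft_def by auto
  have xK: "x \<in> ?K" using xC xu unfolding Kt_def by auto
  have uu: "u0 \<bullet> u0 = 1" using u0_norm by (simp add: power2_norm_eq_inner[symmetric])
  obtain r where r: "r > 0" "ball x r \<subseteq> C" using x(2) by (auto simp: mem_interior)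
  show "u0 \<in> \<eta>" if "x \<in> rev_gauss_image ?K \<eta>"
  proof -
    have "\<exists>v\<in>\<eta>. outer_unit_normal ?K x v" using that unfolding rev_gauss_image_def by simp
    then obtain v where v: "v \<in> \<eta>" "outer_unit_normal ?K x v" by blast
    have vn: "norm v = 1" using v(2) unfolding outer_unit_normal_def by auto
    have vv: "v \<bullet> v = 1" using vn by (simp add: power2_norm_eq_inner[symmetric])
    have key: "w \<bullet> v \<le> 0" if w: "norm w < r" "w \<bullet> u0 \<le> 0" for w
    proof -
      have "x + w \<in> ball x r" using w by (simp add: dist_norm)
      then have "x + w \<in> C" using r by auto
      moreover have "(x + w) \<bullet> u0 \<le> - t" using w xu by (simp add: inner_add_left)
      ultimately have "x + w \<in> ?K" unfolding Kt_def by auto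
      then show ?thesis using v(2) unfolding outer_unit_normal_def by force
    qed
    define w1 where "w1 = v - (v \<bullet> u0) *\<^sub>R u0"
    have w1u: "w1 \<bullet> u0 = 0" unfolding w1_def using uu by (simp add: inner_diff_left)
    define k where "k = r / (2 * (1 + norm w1))"
    have k: "0 < k" "k * norm w1 < r"
    proof -
      show "0 < k" unfolding k_def using r by (simp add: add_pos_nonneg)
      have "k * norm w1 \<le> k * (1 + norm w1)" using \<open>0 < k\<close> by simp
      also have "\<dots> = r / 2"
      proof -
        have n1: "0 < 1 + norm w1" by (simp add: add_pos_nonneg)
        then show ?thesis unfolding k_def by (simp add: field_simps)
      qed
      finally show "k * norm w1 < r" using r by simp
    qed
    have "(k *\<^sub>R w1) \<bullet> v \<le> 0" using k w1u by (intro key) auto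
    moreover have "(- (k *\<^sub>R w1)) \<bullet> v \<le> 0" using k w1u by (intro key) auto
    ultimately have "w1 \<bullet> v = 0" using k(1) by (simp add: mult_le_0_iff zero_le_mult_iff)
    moreover have "w1 \<bullet> v = v \<bullet> v - (v \<bullet> u0) * (v \<bullet> u0)"
      unfolding w1_def inner_diff_left inner_scaleR_left by (simp add: inner_commute[of u0 v])
    ultimately have sq: "(v \<bullet> u0)\<^sup>2 = 1" using vv by (simp add: power2_eq_square)
    have "(- (r/2) *\<^sub>R u0) \<bullet> v \<le> 0" using r u0_norm uu by (intro key) auto
    then have "0 \<le> v \<bullet> u0" using r by (simp add: inner_commute zero_le_mult_iff)
    then have vu: "v \<bullet> u0 = 1" using sq by (metis abs_of_nonneg power2_eq_1_iff abs_minus_cancel abs_one)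
    have "(v - u0) \<bullet> (v - u0) = 0" using vv uu vu by (simp add: inner_diff_left inner_diff_right inner_commute)
    then have "v = u0" by simp
    then show ?thesis using v(1) by simp
  qed
  assume u: "u0 \<in> \<eta>"
  have "x \<notin> interior ?K"
  proof
    assume "x \<in> interior ?K"
    then obtain r' where r': "r' > 0" "ball x r' \<subseteq> ?K" by (auto simp: mem_interior)
    have "x + (r'/2) *\<^sub>R u0 \<in> ball x r'" using r' u0_norm by (simp add: dist_norm)
    then have "x + (r'/2) *\<^sub>R u0 \<in> ?K" using r' by auto
    then have "(x + (r'/2) *\<^sub>R u0) \<bullet> u0 \<le> - t" unfolding Kt_def by auto
    then show False using xu uu r' by (simp add: inner_add_left)
  qed
  then have "x \<in> frontier ?K" using xK closure_subset unfolding frontier_def by auto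
  moreover have "outer_unit_normal ?K x u0"
    unfolding outer_unit_normal_def using u0_norm xu by (auto simp: Kt_def inner_diff_left)
  ultimately show "x \<in> rev_gauss_image ?K \<eta>" using u unfolding rev_gauss_image_def by auto
qed

lemma Dt_eq: "Dt C u0 t = C \<inter> {x. - 2 * t \<le> x \<bullet> u0 \<and> x \<bullet> u0 \<le> - t}" unfolding Dt_def by auto

lemma Dt_closed: "closed (Dt C u0 t)" unfolding Dt_eq
  by (intro closed_Int Ccl) (auto intro!: closed_Collect_conj closed_Collect_le continuous_intros)

lemma Dt_props:
  assumes t: "0 < t"
  shows "convex (Dt C u0 t)" "compact (Dt C u0 t)" "aff_dim (Dt C u0 t) = DIM('a)"
proof -
  show "convex (Dt C u0 t)"
  proof -
    have "Dt C u0 t = C \<inter> {x. u0 \<bullet> x \<le> - t} \<inter> {x. u0 \<bullet> x \<ge> - 2 * t}" unfolding Dt_def by (auto simp: inner_commute)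
    then show ?thesis by (simp add: convex_Int Ccv convex_halfspace_le convex_halfspace_ge)
  qed
  have "bounded (Dt C u0 t)"
    by (rule bounded_subset[OF bounded_level[of "2 * t"]]) (use t in \<open>auto simp: Dt_def\<close>)
  then show "compact (Dt C u0 t)" using Dt_closed by (simp add: compact_eq_bounded_closed)
  obtain p where p: "p \<in> C" "p \<bullet> u0 = - (3/2 * t)" using level_point[of "3/2 * t"] t by auto
  have op: "open {x::'a. - 2 * t < x \<bullet> u0 \<and> x \<bullet> u0 < - t}"
    by (auto intro!: open_Collect_conj open_Collect_less continuous_intros)
  have "p \<in> interior {x. - 2 * t \<le> x \<bullet> u0 \<and> x \<bullet> u0 \<le> - t}"
    by (rule subsetD[OF interior_maximal[OF _ op]]) (use p t in auto)
  then have "C \<inter> interior {x. - 2 * t \<le> x \<bullet> u0 \<and> x \<bullet> u0 \<le> - t} \<noteq> {}" using p by auto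
  then show "aff_dim (Dt C u0 t) = DIM('a)"
    unfolding Dt_eq using aff_dim_convex_Int_nonempty_interior[OF Ccv] Cdim by simp
qed

lemma F_sub_frontier_D:
  assumes t: "0 < t"
  shows "Ft C u0 t \<subseteq> frontier (Dt C u0 t)"
proof
  fix x assume x: "x \<in> Ft C u0 t"
  have uu: "u0 \<bullet> u0 = 1" using u0_norm by (simp add: power2_norm_eq_inner[symmetric])
  have xD: "x \<in> Dt C u0 t" using x t unfolding Ft_def Dt_def by auto
  have "x \<notin> interior (Dt C u0 t)"
  proof
    assume "x \<in> interior (Dt C u0 t)"
    then obtain r' where r': "r' > 0" "ball x r' \<subseteq> Dt C u0 t" by (auto simp: mem_interior)
    have "x + (r'/2) *\<^sub>R u0 \<in> ball x r'" using r' u0_norm by (simp add: dist_norm)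
    then have "x + (r'/2) *\<^sub>R u0 \<in> Dt C u0 t" using r' by auto
    then have "(x + (r'/2) *\<^sub>R u0) \<bullet> u0 \<le> - t" unfolding Dt_def by auto
    then show False using x uu r' unfolding Ft_def by (simp add: inner_add_left)
  qed
  then show "x \<in> frontier (Dt C u0 t)" using xD closure_subset unfolding frontier_def by auto
qed

lemma E_sub_frontier_D:
  assumes t: "t \<le> t'" "t' \<le> 2 * t"
  shows "Et C u0 t' \<subseteq> frontier (Dt C u0 t)"
proof
  fix x assume x: "x \<in> Et C u0 t'"
  have xD: "x \<in> Dt C u0 t" using x t unfolding Et_def Ft_def Dt_def by auto
  have "interior (Dt C u0 t) \<subseteq> interior C" by (rule interior_mono) (auto simp: Dt_def)
  then have "x \<notin> interior (Dt C u0 t)" using x unfolding Et_def by auto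
  then show "x \<in> frontier (Dt C u0 t)" using xD closure_subset unfolding frontier_def by auto
qed

lemma scale_F:
  assumes c: "0 < c"
  shows "(*\<^sub>R) c ` Ft C u0 t = Ft C u0 (c * t)"
proof
  show "(*\<^sub>R) c ` Ft C u0 t \<subseteq> Ft C u0 (c * t)"
    using c by (auto simp: Ft_def intro!: C_scale)
  show "Ft C u0 (c * t) \<subseteq> (*\<^sub>R) c ` Ft C u0 t"
  proof
    fix y assume y: "y \<in> Ft C u0 (c * t)"
    have "(1/c) *\<^sub>R y \<in> Ft C u0 t" using y c by (auto simp: Ft_def intro!: C_scale)
    moreover have "y = c *\<^sub>R ((1/c) *\<^sub>R y)" using c by simp
    ultimately show "y \<in> (*\<^sub>R) c ` Ft C u0 t" by blast
  qed
qed

lemma scale_E: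
  assumes c: "0 < c"
  shows "(*\<^sub>R) c ` Et C u0 t = Et C u0 (c * t)"
proof
  show "(*\<^sub>R) c ` Et C u0 t \<subseteq> Et C u0 (c * t)"
  proof
    fix y assume "y \<in> (*\<^sub>R) c ` Et C u0 t"
    then obtain x where x: "x \<in> Et C u0 t" "y = c *\<^sub>R x" by auto
    have "y \<in> Ft C u0 (c * t)" using x scale_F[OF c, of t] unfolding Et_def by auto
    moreover have "y \<notin> interior C"
    proof
      assume "y \<in> interior C"
      then have "(1/c) *\<^sub>R y \<in> interior C" using c cone_interior_scale[OF Cco, of "1/c" y] by simp
      then show False using x c unfolding Et_def by auto
    qed
    ultimately show "y \<in> Et C u0 (c * t)" unfolding Et_def by auto
  qed
  show "Et C u0 (c * t) \<subseteq> (*\<^sub>R) c ` Et C u0 t"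
  proof
    fix y assume y: "y \<in> Et C u0 (c * t)"
    have "(1/c) *\<^sub>R y \<in> Ft C u0 t" using y c by (auto simp: Et_def Ft_def intro!: C_scale)
    moreover have "(1/c) *\<^sub>R y \<notin> interior C"
    proof
      assume "(1/c) *\<^sub>R y \<in> interior C"
      then have "c *\<^sub>R ((1/c) *\<^sub>R y) \<in> interior C" using c cone_interior_scale[OF Cco, of c "(1/c) *\<^sub>R y"] by blast
      then show False using y c unfolding Et_def by auto
    qed
    moreover have "y = c *\<^sub>R ((1/c) *\<^sub>R y)" using c by simp
    ultimately show "y \<in> (*\<^sub>R) c ` Et C u0 t" unfolding Et_def by blast
  qed
qed

lemma Ft_closed: "closed (Ft C u0 t)"
proof -
  have "Ft C u0 t = C \<inter> {x. x \<bullet> u0 = - t}" unfolding Ft_def by auto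
  then show ?thesis by (simp add: closed_Int Ccl closed_Collect_eq continuous_intros)
qed

lemma Ft_borel: "Ft C u0 t \<in> sets borel" using Ft_closed by (rule borel_closed)
lemma Et_borel: "Et C u0 t \<in> sets borel" unfolding Et_def
  using Ft_borel borel_open[OF open_interior] by (rule sets.Diff)

lemma Ft_norm: "0 < t \<Longrightarrow> x \<in> Ft C u0 t \<Longrightarrow> t \<le> norm x"
proof -
  assume "x \<in> Ft C u0 t"
  then have "\<bar>x \<bullet> u0\<bar> = t" if "0 < t" using that unfolding Ft_def by auto
  moreover have "\<bar>x \<bullet> u0\<bar> \<le> norm x" using Cauchy_Schwarz_ineq2[of x u0] u0_norm by simp
  ultimately show "0 < t \<Longrightarrow> t \<le> norm x" by auto
qed

end

lemma hm_meas_cong: "measurable (hausdorff_measure s :: 'a::euclidean_space measure) N = measurable borel N"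
  by (rule measurable_cong_sets[OF hm_sets refl])

lemma hm_scale_integral:
  fixes g :: "'a::euclidean_space \<Rightarrow> ennreal"
  assumes good: "measure_space (UNIV::'a set) (sets borel) (hausdorff_outer s)"
    and s: "0 \<le> s" and t: "0 < t" and g: "g \<in> borel_measurable borel"
  shows "(\<integral>\<^sup>+x. g x \<partial>(hausdorff_measure s)) = ennreal (t powr s) * (\<integral>\<^sup>+y. g (t *\<^sub>R y) \<partial>(hausdorff_measure s))"
proof -
  let ?\<mu> = "hausdorff_measure s :: 'a measure"
  have meas: "(*\<^sub>R) t \<in> measurable ?\<mu> borel" unfolding hm_meas_cong by measurable
  let ?c = "ennreal ((1/t) powr s)"
  have dist: "distr ?\<mu> borel ((*\<^sub>R) t) = density ?\<mu> (\<lambda>_. ?c)"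
  proof (rule measure_eqI)
    show "sets (distr ?\<mu> borel ((*\<^sub>R) t)) = sets (density ?\<mu> (\<lambda>_. ?c))" by (simp add: hm_sets)
    fix A assume "A \<in> sets (distr ?\<mu> borel ((*\<^sub>R) t))"
    then have A: "A \<in> sets borel" by simp
    have pre: "(*\<^sub>R) t -` A \<inter> space ?\<mu> = (*\<^sub>R) (1/t) ` A"
    proof -
      have "x \<in> (*\<^sub>R) (1/t) ` A \<longleftrightarrow> t *\<^sub>R x \<in> A" for x
      proof
        assume "x \<in> (*\<^sub>R) (1/t) ` A"
        then show "t *\<^sub>R x \<in> A" using t by auto
      next
        assume "t *\<^sub>R x \<in> A"
        moreover have "x = (1/t) *\<^sub>R (t *\<^sub>R x)" using t by simp
        ultimately show "x \<in> (*\<^sub>R) (1/t) ` A" by blast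
      qed
      then show ?thesis by (auto simp: hm_space)
    qed
    have pb: "(*\<^sub>R) (1/t) ` A \<in> sets borel"
      using measurable_sets[OF meas A] unfolding pre hm_sets .
    have "emeasure (distr ?\<mu> borel ((*\<^sub>R) t)) A = emeasure ?\<mu> ((*\<^sub>R) (1/t) ` A)"
      using emeasure_distr[OF meas A] pre by simp
    also have "\<dots> = hausdorff_outer s ((*\<^sub>R) (1/t) ` A)" by (rule hm_emeasure[OF good pb])
    also have "\<dots> = ?c * hausdorff_outer s A" using ho_scale[of "1/t" s A] t s by simp
    also have "\<dots> = ?c * emeasure ?\<mu> A" using hm_emeasure[OF good A] by simp
    also have "\<dots> = emeasure (density ?\<mu> (\<lambda>_. ?c)) A"
      by (rule emeasure_density_const[symmetric]) (simp add: hm_sets A)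
    finally show "emeasure (distr ?\<mu> borel ((*\<^sub>R) t)) A = emeasure (density ?\<mu> (\<lambda>_. ?c)) A" .
  qed
  have gm: "g \<in> borel_measurable ?\<mu>" using g unfolding hm_meas_cong .
  have "(\<integral>\<^sup>+y. g (t *\<^sub>R y) \<partial>?\<mu>) = (\<integral>\<^sup>+x. g x \<partial>(distr ?\<mu> borel ((*\<^sub>R) t)))"
    by (rule nn_integral_distr[symmetric, OF meas]) (simp add: g)
  also have "\<dots> = (\<integral>\<^sup>+x. g x \<partial>(density ?\<mu> (\<lambda>_. ?c)))" by (simp only: dist)
  also have "\<dots> = (\<integral>\<^sup>+x. ?c * g x \<partial>?\<mu>)" by (rule nn_integral_density) (auto simp: gm)
  also have "\<dots> = ?c * (\<integral>\<^sup>+x. g x \<partial>?\<mu>)" by (rule nn_integral_cmult[OF gm])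
  finally have "ennreal (t powr s) * (\<integral>\<^sup>+y. g (t *\<^sub>R y) \<partial>?\<mu>) = ennreal (t powr s) * ?c * (\<integral>\<^sup>+x. g x \<partial>?\<mu>)"
    by (simp add: mult.assoc)
  also have "ennreal (t powr s) * ?c = 1"
    using t by (simp add: ennreal_mult'[symmetric] powr_divide)
  finally show ?thesis by simp
qed

definition Hf :: "nat \<Rightarrow> real \<Rightarrow> 'a::euclidean_space \<Rightarrow> real" where
  "Hf m t y = t ^ m * exp (- (t * norm y)\<^sup>2 / 2)"

lemma Hf_cont: "continuous_on UNIV (\<lambda>p::real\<times>real. fst p ^ m * exp (- (fst p * snd p)\<^sup>2 / 2))"
  by (intro continuous_intros) auto

locale gs = cs C u0 for C :: "'a::euclidean_space set" and u0 +
  fixes m :: nat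
  assumes mdef: "m = DIM('a) - 1"
  assumes good: "measure_space (UNIV::'a set) (sets borel) (hausdorff_outer (real m))"
    and dim: "DIM('a) \<ge> 2"
begin

abbreviation "hm \<equiv> hausdorff_measure (real m) :: 'a measure"

lemma m1: "1 \<le> m" unfolding mdef using dim by simp

lemma D_finite: "0 < t \<Longrightarrow> emeasure hm (frontier (Dt C u0 t)) < \<infinity>"
  using frontier_convex_finite[OF good[unfolded mdef] dim] Dt_props unfolding mdef by blast

lemma F1_finite: "emeasure hm (Ft C u0 1) < \<infinity>"
proof -
  have "emeasure hm (Ft C u0 1) \<le> emeasure hm (frontier (Dt C u0 1))"
    by (rule emeasure_mono[OF F_sub_frontier_D]) (auto simp: hm_sets)
  then show ?thesis using D_finite[of 1] by simp
qed

lemma E_null: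
  assumes t: "0 < t"
  shows "emeasure hm (Et C u0 t) = 0"
proof -
  let ?s = "real m"
  define a where "a = emeasure hm (Et C u0 t)"
  define B where "B = emeasure hm (frontier (Dt C u0 t))"
  have Bfin: "B < \<infinity>" unfolding B_def using D_finite[OF t] .
  have key: "of_nat N * a \<le> B" if N: "N \<ge> 1" for N :: nat
  proof -
    define c where "c k = 1 + real k / real N" for k :: nat
    have c1: "1 \<le> c k" for k unfolding c_def by simp
    have c2: "c k \<le> 2" if "k < N" for k unfolding c_def using that N by (simp add: field_simps)
    have ge: "a \<le> emeasure hm (Et C u0 (c k * t))" for k
    proof -
      have "emeasure hm (Et C u0 (c k * t)) = hausdorff_outer ?s (Et C u0 (c k * t))"
        by (rule hm_emeasure[OF good Et_borel])
      also have "\<dots> = hausdorff_outer ?s ((*\<^sub>R) (c k) ` Et C u0 t)"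
        using scale_E[of "c k" t] c1[of k] by simp
      also have "\<dots> = ennreal (c k powr ?s) * hausdorff_outer ?s (Et C u0 t)"
        using c1[of k] by (intro ho_scale) auto
      also have "hausdorff_outer ?s (Et C u0 t) = a"
        unfolding a_def by (rule hm_emeasure[OF good Et_borel, symmetric])
      finally have eq: "emeasure hm (Et C u0 (c k * t)) = ennreal (c k powr ?s) * a" .
      have "1 \<le> c k powr ?s" using c1[of k] by (simp add: ge_one_powr_ge_zero)
      then have "1 * a \<le> ennreal (c k powr ?s) * a" by (intro mult_right_mono) auto
      then show ?thesis using eq by simp
    qed
    have disj: "disjoint_family_on (\<lambda>k. Et C u0 (c k * t)) {..<N}"
    unfolding disjoint_family_on_def
    proof (intro ballI impI)
      fix k k' assume "k \<in> {..<N}" "k' \<in> {..<N}" "k \<noteq> k'"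
      then have "c k * t \<noteq> c k' * t" using t N unfolding c_def by (auto simp: field_simps)
      then show "Et C u0 (c k * t) \<inter> Et C u0 (c k' * t) = {}" unfolding Et_def Ft_def by auto
    qed
    have "of_nat N * a = (\<Sum>k<N. a)" by simp
    also have "\<dots> \<le> (\<Sum>k<N. emeasure hm (Et C u0 (c k * t)))" by (intro sum_mono ge)
    also have "\<dots> = emeasure hm (\<Union>k<N. Et C u0 (c k * t))"
      by (rule sum_emeasure) (auto simp: hm_sets Et_borel disj)
    also have "\<dots> \<le> B" unfolding B_def
    proof (rule emeasure_mono)
      show "(\<Union>k<N. Et C u0 (c k * t)) \<subseteq> frontier (Dt C u0 t)"
      proof (intro UN_least)
        fix k assume k: "k \<in> {..<N}"
        have "1 * t \<le> c k * t" using c1[of k] t by (intro mult_right_mono) auto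
        moreover have "c k * t \<le> 2 * t" using c2[of k] k t by (intro mult_right_mono) auto
        ultimately show "Et C u0 (c k * t) \<subseteq> frontier (Dt C u0 t)" by (intro E_sub_frontier_D) auto
      qed
    qed (simp add: hm_sets)
    finally show ?thesis .
  qed
  show ?thesis
  proof (rule ccontr)
    assume "emeasure hm (Et C u0 t) \<noteq> 0"
    then have a0: "a \<noteq> 0" unfolding a_def .
    obtain \<beta> where \<beta>: "B = ennreal \<beta>" "0 \<le> \<beta>" using Bfin by (cases B) auto
    have "a \<le> B" using key[of 1] by simp
    then obtain \<alpha> where \<alpha>: "a = ennreal \<alpha>" "0 \<le> \<alpha>" using Bfin by (cases a) auto
    have \<alpha>0: "0 < \<alpha>" using a0 \<alpha> by (auto simp: less_le)
    define N where "N = nat \<lceil>\<beta> / \<alpha>\<rceil> + 1"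
    have "of_nat N * a \<le> B" using key[of N] unfolding N_def by simp
    then have "ennreal (real N * \<alpha>) \<le> ennreal \<beta>" using \<alpha> \<beta>
      by (simp add: ennreal_mult' ennreal_of_nat_eq_real_of_nat)
    then have "real N * \<alpha> \<le> \<beta>" using \<beta>(2) by simp
    moreover have "real N > \<beta> / \<alpha>" unfolding N_def by linarith
    then have "real N * \<alpha> > \<beta>" using \<alpha>0 by (simp add: field_simps)
    ultimately show False by simp
  qed
qed

lemma Ft_scale_mem: "0 < t \<Longrightarrow> t *\<^sub>R y \<in> Ft C u0 t \<longleftrightarrow> y \<in> Ft C u0 1"
proof -
  assume t: "0 < t"
  have 1: "y \<in> C" if "t *\<^sub>R y \<in> C"
  proof -
    have "(1/t) *\<^sub>R (t *\<^sub>R y) \<in> C" using t that by (rule_tac C_scale) auto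
    moreover have "(1/t) *\<^sub>R (t *\<^sub>R y) = y" using t by simp
    ultimately show "y \<in> C" by metis
  qed
  have 2: "t *\<^sub>R y \<in> C" if "y \<in> C" using t that by (intro C_scale) auto
  have "t *\<^sub>R y \<in> C \<longleftrightarrow> y \<in> C" using 1 2 by blast
  have 3: "t * (y \<bullet> u0) = - t \<longleftrightarrow> y \<bullet> u0 = - 1"
  proof -
    have "t * (y \<bullet> u0) = - t \<longleftrightarrow> t * (y \<bullet> u0) = t * (- 1)" by simp
    also have "\<dots> \<longleftrightarrow> y \<bullet> u0 = - 1" using t by (simp only: mult_cancel_left) simp
    finally show ?thesis .
  qed
  show ?thesis using 1 2 3 t unfolding Ft_def by auto
qed

lemma gauss_int:
  assumes t: "0 < t" and eta: "\<eta> \<subseteq> Omega C"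
  shows "(\<integral>\<^sup>+x. indicator (rev_gauss_image (Kt C u0 t) \<eta>) x * ennreal (exp (- (norm x)\<^sup>2 / 2)) \<partial>hm)
       = (if u0 \<in> \<eta> then (\<integral>\<^sup>+x. indicator (Ft C u0 t) x * ennreal (exp (- (norm x)\<^sup>2 / 2)) \<partial>hm) else 0)"
proof -
  let ?G = "rev_gauss_image (Kt C u0 t) \<eta>"
  let ?e = "\<lambda>x::'a. ennreal (exp (- (norm x)\<^sup>2 / 2))"
  have AE: "AE x in hm. indicator ?G x * ?e x = (if u0 \<in> \<eta> then indicator (Ft C u0 t) x * ?e x else 0)"
  proof (rule AE_I')
    show "Et C u0 t \<in> null_sets hm" using E_null[OF t] Et_borel by (auto simp: null_sets_def hm_sets)
    show "{x \<in> space hm. \<not> (indicator ?G x * ?e x = (if u0 \<in> \<eta> then indicator (Ft C u0 t) x * ?e x else 0))} \<subseteq> Et C u0 t"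
    proof (rule subsetI, rule ccontr)
      fix x assume x: "x \<in> {x \<in> space hm. \<not> (indicator ?G x * ?e x = (if u0 \<in> \<eta> then indicator (Ft C u0 t) x * ?e x else 0))}"
        and nE: "x \<notin> Et C u0 t"
      show False
      proof (cases "x \<in> Ft C u0 t")
        case True
        then have "x \<in> interior C" using nE unfolding Et_def by auto
        then have "x \<in> ?G \<longleftrightarrow> u0 \<in> \<eta>" using normal_interior[OF t True] by blast
        then show False using x True by (auto simp: indicator_def)
      next
        case False
        then have "x \<notin> ?G" using normal_in_F[OF t eta] by auto
        then have "indicator ?G x = (0::ennreal)" "indicator (Ft C u0 t) x = (0::ennreal)"
          using False by auto
        then show False using x by (cases "u0 \<in> \<eta>") simp_all
      qed
    qed
  qed
  have "(\<integral>\<^sup>+x. indicator ?G x * ?e x \<partial>hm) = (\<integral>\<^sup>+x. (if u0 \<in> \<eta> then indicator (Ft C u0 t) x * ?e x else 0) \<partial>hm)"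
    by (rule nn_integral_cong_AE[OF AE])
  then show ?thesis by (cases "u0 \<in> \<eta>") auto
qed

lemma J_scale:
  assumes t: "0 < t"
  shows "(\<integral>\<^sup>+x. indicator (Ft C u0 t) x * ennreal (exp (- (norm x)\<^sup>2 / 2)) \<partial>hm)
       = (\<integral>\<^sup>+y. ennreal (indicator (Ft C u0 1) y * Hf m t y) \<partial>hm)"
proof -
  let ?m = "m"
  have [measurable]: "Ft C u0 t \<in> sets borel" by (rule Ft_borel)
  define g where "g x = indicator (Ft C u0 t) x * ennreal (exp (- (norm x)\<^sup>2 / 2))" for x :: 'a
  have gm: "g \<in> borel_measurable borel" unfolding g_def by measurable
  have gm2: "(\<lambda>y. g (t *\<^sub>R y)) \<in> borel_measurable hm" unfolding hm_meas_cong g_def by measurable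
  have "(\<integral>\<^sup>+x. g x \<partial>hm) = ennreal (t powr real ?m) * (\<integral>\<^sup>+y. g (t *\<^sub>R y) \<partial>hm)"
    by (rule hm_scale_integral[OF good _ t gm]) simp
  also have "\<dots> = (\<integral>\<^sup>+y. ennreal (t powr real ?m) * g (t *\<^sub>R y) \<partial>hm)"
    by (rule nn_integral_cmult[symmetric, OF gm2])
  also have "\<dots> = (\<integral>\<^sup>+y. ennreal (indicator (Ft C u0 1) y * Hf ?m t y) \<partial>hm)"
  proof (rule nn_integral_cong)
    fix y :: 'a
    have pw: "t powr real ?m = t ^ ?m" using t by (simp add: powr_realpow)
    have nt: "norm (t *\<^sub>R y) = t * norm y" using t by simp
    show "ennreal (t powr real ?m) * g (t *\<^sub>R y) = ennreal (indicator (Ft C u0 1) y * Hf ?m t y)"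
    proof (cases "y \<in> Ft C u0 1")
      case True
      then have "t *\<^sub>R y \<in> Ft C u0 t" using Ft_scale_mem[OF t] by simp
      then show ?thesis using True t unfolding g_def Hf_def pw nt
        by (simp add: ennreal_mult'[symmetric])
    next
      case False
      then have "t *\<^sub>R y \<notin> Ft C u0 t" using Ft_scale_mem[OF t] by simp
      then show ?thesis using False unfolding g_def by simp
    qed
  qed
  finally show ?thesis unfolding g_def .
qed

definition "ff t = (\<integral>y. indicator (Ft C u0 1) y * Hf m t y \<partial>hm)"

definition "M1 = measure hm (Ft C u0 1)"

lemma M1_nonneg: "0 \<le> M1" unfolding M1_def by simp

lemma Hf_bound: "0 \<le> t \<Longrightarrow> 0 \<le> Hf m t y \<and> Hf m t y \<le> t ^ m"
proof -
  assume t: "0 \<le> t"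
  have e1: "exp (- (t * norm y)\<^sup>2 / 2) \<le> 1" by simp
  have "0 \<le> t ^ m" using t by simp
  then show ?thesis unfolding Hf_def using mult_left_le[OF e1 \<open>0 \<le> t ^ m\<close>] by simp
qed

lemma ind_int: "integrable hm (\<lambda>y. c * indicator (Ft C u0 1) y :: real)"
  by (intro integrable_mult_right integrable_real_indicator F1_finite) (simp add: hm_sets Ft_borel)

lemma int_ff: "0 \<le> t \<Longrightarrow> integrable hm (\<lambda>y. indicator (Ft C u0 1) y * Hf m t y)"
proof -
  assume t: "0 \<le> t"
  have [measurable]: "Ft C u0 1 \<in> sets borel" by (rule Ft_borel)
  show ?thesis
  proof (rule Bochner_Integration.integrable_bound[OF ind_int[of "t ^ m"]])
    show "(\<lambda>y. indicator (Ft C u0 1) y * Hf m t y) \<in> borel_measurable hm"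
      unfolding hm_meas_cong Hf_def by measurable
    show "AE y in hm. norm (indicator (Ft C u0 1) y * Hf m t y) \<le> norm (t ^ m * indicator (Ft C u0 1) y)"
    proof (intro AE_I2)
      fix y :: 'a
      have "0 \<le> Hf m t y" "Hf m t y \<le> t ^ m" using Hf_bound[OF t] by auto
      then show "norm (indicator (Ft C u0 1) y * Hf m t y) \<le> norm (t ^ m * indicator (Ft C u0 1) y)"
        using t by (cases "y \<in> Ft C u0 1") auto
    qed
  qed
qed

lemma J_eq: "0 \<le> t \<Longrightarrow> (\<integral>\<^sup>+y. ennreal (indicator (Ft C u0 1) y * Hf m t y) \<partial>hm) = ennreal (ff t)"
proof -
  assume t: "0 \<le> t"
  have "0 \<le> indicator (Ft C u0 1) y * Hf m t y" for y :: 'a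
    using Hf_bound[OF t, of y] by (intro mult_nonneg_nonneg) auto
  then show ?thesis unfolding ff_def by (rule nn_integral_eq_integral[OF int_ff[OF t] AE_I2])
qed

lemma ind_integral: "(\<integral>y. c * indicator (Ft C u0 1) y \<partial>hm) = c * M1"
  unfolding M1_def using F1_finite by (simp add: hm_sets Ft_borel)

lemma ff_mono_bound:
  assumes t: "0 \<le> t" and b: "\<And>y. y \<in> Ft C u0 1 \<Longrightarrow> Hf m t y \<le> c"
  shows "ff t \<le> c * M1"
proof -
  have pw: "indicator (Ft C u0 1) y * Hf m t y \<le> c * indicator (Ft C u0 1) y" for y :: 'a
  proof (cases "y \<in> Ft C u0 1")
    case True then show ?thesis using b[of y] by simp
  qed simp
  have "ff t \<le> (\<integral>y. c * indicator (Ft C u0 1) y \<partial>hm)"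
    unfolding ff_def by (rule integral_mono[OF int_ff[OF t] ind_int pw])
  then show ?thesis unfolding ind_integral .
qed

lemma ff_nonneg: "0 \<le> t \<Longrightarrow> 0 \<le> ff t"
proof -
  assume t: "0 \<le> t"
  have "0 \<le> indicator (Ft C u0 1) y * Hf m t y" for y :: 'a
    using Hf_bound[OF t, of y] by (intro mult_nonneg_nonneg) auto
  then show ?thesis unfolding ff_def by (intro integral_nonneg_AE AE_I2)
qed

lemma ff_le: "0 \<le> t \<Longrightarrow> ff t \<le> t ^ m * M1"
proof -
  assume t: "0 \<le> t"
  show ?thesis by (rule ff_mono_bound[OF t]) (use Hf_bound[OF t] in blast)
qed

lemma ff_tail: "0 \<le> t \<Longrightarrow> ff t \<le> (t ^ m * exp (- t\<^sup>2 / 2)) * M1"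
proof -
  assume t: "0 \<le> t"
  show ?thesis
  proof (rule ff_mono_bound[OF t])
  fix y assume y: "y \<in> Ft C u0 1"
  have "1 \<le> norm y" using Ft_norm[of 1 y] y by simp
  then have "1 \<le> (norm y)\<^sup>2" by (simp add: one_le_power)
  then have "t\<^sup>2 * 1 \<le> t\<^sup>2 * (norm y)\<^sup>2" by (intro mult_left_mono) auto
  then have "t\<^sup>2 \<le> (t * norm y)\<^sup>2" by (simp add: power_mult_distrib)
  then have "- (t * norm y)\<^sup>2 / 2 \<le> - t\<^sup>2 / 2" by linarith
  then have "exp (- (t * norm y)\<^sup>2 / 2) \<le> exp (- t\<^sup>2 / 2)" by (rule exp_mono)
  moreover have "0 \<le> t ^ m" using t by simp
  ultimately show "Hf m t y \<le> t ^ m * exp (- t\<^sup>2 / 2)"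
    unfolding Hf_def by (rule mult_left_mono)
  qed
qed

lemma ff_diff:
  assumes t: "0 \<le> t" "0 \<le> t'" and b: "\<And>y. y \<in> Ft C u0 1 \<Longrightarrow> \<bar>Hf m t y - Hf m t' y\<bar> \<le> e"
  shows "\<bar>ff t - ff t'\<bar> \<le> e * M1"
proof -
  let ?I = "\<lambda>t y. indicator (Ft C u0 1) y * Hf m t y"
  have gen: "ff a \<le> ff b + e * M1" if ab: "0 \<le> a" "0 \<le> b"
    and bb: "\<And>y. y \<in> Ft C u0 1 \<Longrightarrow> Hf m a y \<le> Hf m b y + e" for a b
  proof -
    have i1: "integrable hm (\<lambda>y. ?I b y + e * indicator (Ft C u0 1) y)"
      by (intro Bochner_Integration.integrable_add int_ff ab ind_int)
    have pw: "?I a y \<le> ?I b y + e * indicator (Ft C u0 1) y" for y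
      using bb[of y] by (cases "y \<in> Ft C u0 1") auto
    have "ff a \<le> (\<integral>y. ?I b y + e * indicator (Ft C u0 1) y \<partial>hm)"
      unfolding ff_def by (rule integral_mono[OF int_ff[OF ab(1)] i1 pw])
    also have "\<dots> = (\<integral>y. ?I b y \<partial>hm) + (\<integral>y. e * indicator (Ft C u0 1) y \<partial>hm)"
      by (rule Bochner_Integration.integral_add[OF int_ff[OF ab(2)] ind_int])
    also have "\<dots> = ff b + e * M1" unfolding ff_def ind_integral ..
    finally show ?thesis .
  qed
  have 1: "ff t \<le> ff t' + e * M1"
  proof (rule gen[OF t])
    fix y assume "y \<in> Ft C u0 1" then show "Hf m t y \<le> Hf m t' y + e" using b[of y] by linarith
  qed
  have 2: "ff t' \<le> ff t + e * M1"
  proof (rule gen[OF t(2) t(1)])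
    fix y assume "y \<in> Ft C u0 1" then show "Hf m t' y \<le> Hf m t y + e" using b[of y] by linarith
  qed
  show ?thesis using 1 2 by linarith
qed

end

context gs
begin

lemma ff_cont:
  assumes a: "0 < a"
  shows "continuous_on {a..b} ff"
proof -
  obtain R where R: "\<And>y. y \<in> {x\<in>C. - 1 \<le> x \<bullet> u0} \<Longrightarrow> norm y \<le> R"
    using bounded_level[of 1] unfolding bounded_iff by auto
  have RF: "norm y \<le> \<bar>R\<bar>" if "y \<in> Ft C u0 1" for y using R[of y] that unfolding Ft_def by force
  let ?\<phi> = "\<lambda>p::real\<times>real. fst p ^ m * exp (- (fst p * snd p)\<^sup>2 / 2)"
  let ?S = "{a..b} \<times> {0..\<bar>R\<bar>}"
  have uc: "uniformly_continuous_on ?S ?\<phi>"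
    by (intro compact_uniformly_continuous continuous_on_subset[OF Hf_cont] compact_Times compact_Icc) auto
  show ?thesis unfolding continuous_on_iff
  proof (intro ballI allI impI)
    fix x e :: real assume x: "x \<in> {a..b}" and e: "0 < e"
    define e' where "e' = e / (M1 + 1)"
    have e': "0 < e'" unfolding e'_def using e M1_nonneg by simp
    obtain d where d: "d > 0" "\<And>p p'. p \<in> ?S \<Longrightarrow> p' \<in> ?S \<Longrightarrow> dist p' p < d \<Longrightarrow> dist (?\<phi> p') (?\<phi> p) < e'"
      using uc e' unfolding uniformly_continuous_on_def by metis
    show "\<exists>d>0. \<forall>x'\<in>{a..b}. dist x' x < d \<longrightarrow> dist (ff x') (ff x) < e"
    proof (intro exI[of _ d] conjI ballI impI)
      show "0 < d" by fact
      fix x' assume x': "x' \<in> {a..b}" and dx: "dist x' x < d"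
      have "\<bar>ff x' - ff x\<bar> \<le> e' * M1"
      proof (rule ff_diff)
        show "0 \<le> x'" "0 \<le> x" using x x' a by auto
        fix y assume y: "y \<in> Ft C u0 1"
        have p: "(x, norm y) \<in> ?S" "(x', norm y) \<in> ?S" using x x' RF[OF y] by auto
        have "dist (x', norm y) (x, norm y) = dist x' x" by (simp add: dist_Pair_Pair)
        then have "dist (?\<phi> (x', norm y)) (?\<phi> (x, norm y)) < e'" using d(2)[OF p(1) p(2)] dx by simp
        then show "\<bar>Hf m x' y - Hf m x y\<bar> \<le> e'" unfolding Hf_def by (simp add: dist_real_def)
      qed
      also have "e' * M1 < e"
      proof -
        have "e' * M1 < e' * (M1 + 1)" using e' by simp
        also have "\<dots> = e" unfolding e'_def using M1_nonneg by simp
        finally show ?thesis .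
      qed
      finally show "dist (ff x') (ff x) < e" by (simp add: dist_real_def)
    qed
  qed
qed

lemma tail_lim: "((\<lambda>b::real. b ^ m * exp (- b\<^sup>2 / 2)) \<longlongrightarrow> 0) at_top"
proof (rule tendsto_sandwich[of "\<lambda>_. 0" _ _ "\<lambda>b. b ^ m / exp b"])
  show "\<forall>\<^sub>F b::real in at_top. 0 \<le> b ^ m * exp (- b\<^sup>2 / 2)"
    by (rule eventually_mono[OF eventually_ge_at_top[of "0::real"]]) simp
  have pw: "b ^ m * exp (- b\<^sup>2 / 2) \<le> b ^ m / exp b" if b: "2 \<le> b" for b :: real
  proof -
    have "2 * b \<le> b * b" using b by (intro mult_right_mono) auto
    then have "- b\<^sup>2 / 2 \<le> - b" by (simp add: power2_eq_square)
    then have "exp (- b\<^sup>2 / 2) \<le> exp (- b)" by simp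
    then have "b ^ m * exp (- b\<^sup>2 / 2) \<le> b ^ m * exp (- b)" using b by (intro mult_left_mono) auto
    then show "b ^ m * exp (- b\<^sup>2 / 2) \<le> b ^ m / exp b" by (simp add: exp_minus field_simps)
  qed
  show "\<forall>\<^sub>F b::real in at_top. b ^ m * exp (- b\<^sup>2 / 2) \<le> b ^ m / exp b"
    by (rule eventually_mono[OF eventually_ge_at_top[of "2::real"]]) (rule pw)
qed (auto intro: tendsto_power_div_exp_0)

lemma ff_pair: "\<exists>t1 t2. 0 < t1 \<and> t1 < t2 \<and> ff t1 = ff t2"
proof (cases "\<forall>t>0. ff t = 0")
  case True
  then show ?thesis by (intro exI[of _ 1] exI[of _ 2]) auto
next
  case False
  then obtain t0 where t0: "0 < t0" "ff t0 \<noteq> 0" by auto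
  have ft0: "0 < ff t0" using ff_nonneg[of t0] t0 by simp
  define c where "c = ff t0 / 2"
  have c: "0 < c" "c < ff t0" using ft0 unfolding c_def by auto
  have M1pos: "0 < M1"
  proof (rule ccontr)
    assume "\<not> 0 < M1"
    then have "M1 = 0" using M1_nonneg by simp
    then show False using ff_le[of t0] t0 ft0 by simp
  qed
  define a where "a = min (t0 / 2) (min 1 (c / (2 * M1)))"
  have a: "0 < a" "a < t0" "a \<le> 1" "a \<le> c / (2 * M1)" using t0 c M1pos unfolding a_def by auto
  have "ff a \<le> a ^ m * M1" using ff_le a by simp
  also have "a ^ m \<le> a" using a m1 by (metis power_decreasing power_one_right less_imp_le)
  then have "a ^ m * M1 \<le> a * M1" using M1pos by (intro mult_right_mono) auto
  also have "a * M1 \<le> c / 2" using a(4) M1pos by (simp add: field_simps)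
  finally have fa: "ff a < c" using c by simp
  have ev: "\<forall>\<^sub>F b in at_top. b ^ m * exp (- b\<^sup>2 / 2) < c / (2 * M1) \<and> t0 < b"
    using order_tendstoD(2)[OF tail_lim, of "c / (2 * M1)"] c M1pos eventually_gt_at_top[of t0]
    by (auto elim: eventually_conj)
  obtain b where b: "b ^ m * exp (- b\<^sup>2 / 2) < c / (2 * M1)" "t0 < b"
    using eventually_happens[OF ev] by auto
  have "ff b \<le> (b ^ m * exp (- b\<^sup>2 / 2)) * M1" using ff_tail b t0 by simp
  also have "\<dots> \<le> c / (2 * M1) * M1" using b M1pos by (intro mult_right_mono) auto
  also have "\<dots> < c" using M1pos c by (simp add: field_simps)
  finally have fb: "ff b < c" .
  obtain t1 where t1: "a \<le> t1" "t1 \<le> t0" "ff t1 = c"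
    using IVT'[where f=ff and a=a and y=c and b=t0] fa c a ff_cont[OF a(1), of t0] by auto
  obtain t2 where t2: "t0 \<le> t2" "t2 \<le> b" "ff t2 = c"
    using IVT2'[where f=ff and a=t0 and y=c and b=b] fb c b ff_cont[OF t0(1), of b] by auto
  have "t1 \<noteq> t0" using t1 c by auto
  moreover have "t2 \<noteq> t0" using t2 c by auto
  ultimately show ?thesis using t1 t2 a by (intro exI[of _ t1] exI[of _ t2]) auto
qed

end

theorem theorem5p6:
  fixes C \<omega> :: "'a::euclidean_space set"
  assumes "DIM('a) \<ge> 2"
    and "closed C" and "convex C" and "cone C" and "pointed_cone C"
    and "aff_dim C = int DIM('a)"
    and "\<omega> \<subseteq> Omega C" and "\<omega> \<noteq> {}" and "compact \<omega>"
  shows "\<exists>K L. K \<in> KCw C \<omega> \<and> L \<in> KCw C \<omega> \<and> K \<noteq> L \<and>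
           (\<forall>\<eta> \<in> sets borel. \<eta> \<subseteq> Omega C \<longrightarrow>
              gauss_surface_measure K \<eta> = gauss_surface_measure L \<eta>)"
proof -
  obtain u0 where u0w: "u0 \<in> \<omega>" using assms(8) by blast
  have u0O: "u0 \<in> Omega C" using assms(7) u0w by blast
  interpret cs C u0 using assms u0O by unfold_locales auto
  have sdef: "real DIM('a) - 1 = real (DIM('a) - 1)" using assms(1) by (simp add: of_nat_diff)
  show ?thesis
  proof (cases "measure_space (UNIV::'a set) (sets borel) (hausdorff_outer (real (DIM('a) - 1)))")
    case False
    have zero: "gauss_surface_measure K \<eta> = 0" for K \<eta> :: "'a set"
    proof -
      let ?\<mu> = "hausdorff_measure (real DIM('a) - 1) :: 'a measure"
      have "UNIV \<in> null_sets ?\<mu>"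
        using hm_bad[OF False[folded sdef]] by (auto simp: null_sets_def hm_sets)
      then have "AE x in ?\<mu>. indicator (rev_gauss_image K \<eta>) x * ennreal (exp (- (norm x)\<^sup>2 / 2)) = 0"
        by (rule AE_I') auto
      then have "(\<integral>\<^sup>+ x. indicator (rev_gauss_image K \<eta>) x * ennreal (exp (- (norm x)\<^sup>2 / 2)) \<partial>?\<mu>) = (\<integral>\<^sup>+ x. 0 \<partial>?\<mu>)"
        by (rule nn_integral_cong_AE)
      then have "(\<integral>\<^sup>+ x. indicator (rev_gauss_image K \<eta>) x * ennreal (exp (- (norm x)\<^sup>2 / 2)) \<partial>?\<mu>) = 0"
        by simp
      then show ?thesis unfolding gauss_surface_measure_def by simp
    qed
    have "Kt C u0 1 \<in> KCw C \<omega>" by (rule Kt_KCw) (use u0w assms(7) in auto)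
    moreover have "Kt C u0 2 \<in> KCw C \<omega>" by (rule Kt_KCw) (use u0w assms(7) in auto)
    moreover have "Kt C u0 1 \<noteq> Kt C u0 2" by (rule Kt_neq) auto
    ultimately show ?thesis by (auto simp: zero)
  next
    case True
    interpret gs C u0 "DIM('a) - 1" using True assms(1) by unfold_locales auto
    obtain t1 t2 where t: "0 < t1" "t1 < t2" "ff t1 = ff t2" using ff_pair by blast
    have eq: "gauss_surface_measure (Kt C u0 t) \<eta> =
        ennreal ((2 * pi) powr (- (real DIM('a) / 2))) * (if u0 \<in> \<eta> then ennreal (ff t) else 0)"
      if tt: "0 < t" and eta: "\<eta> \<subseteq> Omega C" for t \<eta>
      unfolding gauss_surface_measure_def sdef gauss_int[OF tt eta] J_scale[OF tt] J_eq[OF less_imp_le[OF tt]] ..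
    have "Kt C u0 t1 \<in> KCw C \<omega>" by (rule Kt_KCw) (use u0w assms(7) t in auto)
    moreover have "Kt C u0 t2 \<in> KCw C \<omega>" by (rule Kt_KCw) (use u0w assms(7) t in auto)
    moreover have "Kt C u0 t1 \<noteq> Kt C u0 t2" by (rule Kt_neq) (use t in auto)
    moreover have "\<forall>\<eta> \<in> sets borel. \<eta> \<subseteq> Omega C \<longrightarrow>
        gauss_surface_measure (Kt C u0 t1) \<eta> = gauss_surface_measure (Kt C u0 t2) \<eta>"
    proof (intro ballI impI)
      fix \<eta> :: "'a set" assume "\<eta> \<subseteq> Omega C"
      then show "gauss_surface_measure (Kt C u0 t1) \<eta> = gauss_surface_measure (Kt C u0 t2) \<eta>"
        using eq[of t1 \<eta>] eq[of t2 \<eta>] t by simp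
    qed
    ultimately show ?thesis by blast
  qed
qed

end
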